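(* Assume $\boldsymbol\Gamma$ is irreducible, fix $\Lambda^{(1)}_j\ge 0$, set $\Lambda_j=\theta\Lambda^{(1)}_j$ for $\theta>0$, and let $-\mu(\theta)$ (resp. $-\lambda(\theta)$) be the largest eigenvalue of $\boldsymbol\Theta-\boldsymbol\Psi$ (resp. of $\boldsymbol\Gamma-\mathrm{diag}(\Lambda_j)$). Let $\lambda^{(1)}=\frac1N\sum_j\Lambda^{(1)}_j$. Then $\mu(\theta)=2\theta\lambda^{(1)}+O(\theta^2)$ as $\theta\to0$. If moreover $\Gamma_{jl}=\Gamma>0$ for all $j\neq l$, then $$\mu(\theta)=2\theta\lambda^{(1)}-\theta^2\frac{2(N+2)}{N^2(N+1)\Gamma}\sum_{j=0}^{N-1}(\Lambda^{(1)}_j-\lambda^{(1)})^2+O(\theta^3),$$ the corresponding unit eigenvector is $\mathbf W(\theta)=\mathbf W^{(0)}+\theta\mathbf W^{(1)}+O(\theta^2)$ with $W^{(0)}_{jl}=c_N:=\sqrt2/\sqrt{N(N+1)}$ and $W^{(1)}_{jl}=-\frac{c_N}{\Gamma N}(\Lambda^{(1)}_j+\Lambda^{(1)}_l-2\lambda^{(1)})$ for $j\le l$, and $$\mu(\theta)-2\lambda(\theta)=-\frac{2\theta^2}{N^2(N+1)\Gamma}\sum_{j=0}^{N-1}(\Lambda^{(1)}_j-\lambda^{(1)})^2+O(\theta^3),$$ which is negative for small $\theta$ as soon as the $\Lambda^{(1)}_j$ are not all equal.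
   Context: Let $N\ge 2$. Let $\boldsymbol\Gamma=(\Gamma_{jl})_{j,l=0}^{N-1}$ be a real symmetric matrix with $\Gamma_{jl}\ge 0$ for $j\neq l$ and $\Gamma_{jj}=-\sum_{l\neq j}\Gamma_{jl}$. $\boldsymbol\Gamma$ is called irreducible if the graph on $\{0,\dots,N-1\}$ with an edge between $j\neq l$ whenever $\Gamma_{jl}>0$ is connected. Let $\mathcal T_N=\{(j,l)\in\mathbb N^2:0\le j\le l\le N-1\}$; for $\mathbf S\in\mathbb R^{\mathcal T_N}$, $S_{jl}$ with $j>l$ means $S_{lj}$. Define $(\boldsymbol\Psi\mathbf S)_{jl}=(\Lambda_j+\Lambda_l)S_{jl}$ and $(\boldsymbol\Theta\mathbf S)_{jl}=2\Gamma_{jl}\mathbf 1_{j\neq l}(S_{jj}+S_{ll}-2S_{jl})+\sum_{n\notin\{j,l\}}[\Gamma_{ln}(S_{jn}-S_{jl})+\Gamma_{jn}(S_{nl}-S_{jl})]$. *)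

theory Defs
  imports Complex_Main "HOL-Library.Landau_Symbols"
begin

text \<open>Index set T_N = {(j,l). 0 <= j <= l <= N-1}; elements of R^{T_N} are functions
  on nat \<times> nat, only their values on T_N matter.\<close>
definition triN :: "nat \<Rightarrow> (nat \<times> nat) set" where
  "triN N = {(j,l). j \<le> l \<and> l < N}"

definition sget :: "(nat \<times> nat \<Rightarrow> real) \<Rightarrow> nat \<Rightarrow> nat \<Rightarrow> real" where
  "sget S j l = (if j \<le> l then S (j,l) else S (l,j))"

definition gen_matrix :: "nat \<Rightarrow> (nat \<Rightarrow> nat \<Rightarrow> real) \<Rightarrow> bool" where
  "gen_matrix N G \<longleftrightarrow>
     (\<forall>j<N. \<forall>l<N. G j l = G l j) \<and>
     (\<forall>j<N. \<forall>l<N. j \<noteq> l \<longrightarrow> G j l \<ge> 0) \<and>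
     (\<forall>j<N. G j j = - (\<Sum>l\<in>{..<N} - {j}. G j l))"

definition irreducible_gen :: "nat \<Rightarrow> (nat \<Rightarrow> nat \<Rightarrow> real) \<Rightarrow> bool" where
  "irreducible_gen N G \<longleftrightarrow>
     (\<forall>j<N. \<forall>l<N. (\<lambda>a b. a < N \<and> b < N \<and> a \<noteq> b \<and> G a b > 0)\<^sup>*\<^sup>* j l)"

definition PsiOp :: "(nat \<Rightarrow> real) \<Rightarrow> (nat \<times> nat \<Rightarrow> real) \<Rightarrow> (nat \<times> nat \<Rightarrow> real)" where
  "PsiOp Lam S = (\<lambda>(j,l). (Lam j + Lam l) * sget S j l)"

definition ThetaOp :: "nat \<Rightarrow> (nat \<Rightarrow> nat \<Rightarrow> real) \<Rightarrow> (nat \<times> nat \<Rightarrow> real) \<Rightarrow> (nat \<times> nat \<Rightarrow> real)" where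
  "ThetaOp N G S = (\<lambda>(j,l).
      2 * G j l * (if j \<noteq> l then 1 else 0) * (sget S j j + sget S l l - 2 * sget S j l)
    + (\<Sum>n\<in>{..<N} - {j,l}. G l n * (sget S j n - sget S j l) + G j n * (sget S n l - sget S j l)))"

definition op_eigvec :: "nat \<Rightarrow> (nat \<Rightarrow> nat \<Rightarrow> real) \<Rightarrow> (nat \<Rightarrow> real) \<Rightarrow> real \<Rightarrow> (nat \<times> nat \<Rightarrow> real) \<Rightarrow> bool" where
  "op_eigvec N G Lam e S \<longleftrightarrow> (\<exists>p\<in>triN N. S p \<noteq> 0) \<and>
     (\<forall>p\<in>triN N. ThetaOp N G S p - PsiOp Lam S p = e * S p)"

definition op_eigval :: "nat \<Rightarrow> (nat \<Rightarrow> nat \<Rightarrow> real) \<Rightarrow> (nat \<Rightarrow> real) \<Rightarrow> real \<Rightarrow> bool" where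
  "op_eigval N G Lam e \<longleftrightarrow> (\<exists>S. op_eigvec N G Lam e S)"

definition muF :: "nat \<Rightarrow> (nat \<Rightarrow> nat \<Rightarrow> real) \<Rightarrow> (nat \<Rightarrow> real) \<Rightarrow> real" where
  "muF N G Lam = - Max {e. op_eigval N G Lam e}"

definition mat_eigval :: "nat \<Rightarrow> (nat \<Rightarrow> nat \<Rightarrow> real) \<Rightarrow> real \<Rightarrow> bool" where
  "mat_eigval N M e \<longleftrightarrow> (\<exists>v. (\<exists>j<N. v j \<noteq> 0) \<and> (\<forall>j<N. (\<Sum>l<N. M j l * v l) = e * v j))"

definition lamF :: "nat \<Rightarrow> (nat \<Rightarrow> nat \<Rightarrow> real) \<Rightarrow> (nat \<Rightarrow> real) \<Rightarrow> real" where
  "lamF N G Lam = - Max {e. mat_eigval N (\<lambda>j l. G j l - (if j = l then Lam j else 0)) e}"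

end

theory Submission
  imports Defs "HOL-Analysis.Function_Topology" "Jordan_Normal_Form.Spectral_Radius"
begin


definition ip :: "'i set \<Rightarrow> ('i\<Rightarrow>real) \<Rightarrow> ('i\<Rightarrow>real) \<Rightarrow> real" where
  "ip I x y = (\<Sum>i\<in>I. x i * y i)"
definition mop :: "'i set \<Rightarrow> ('i\<Rightarrow>'i\<Rightarrow>real) \<Rightarrow> ('i\<Rightarrow>real) \<Rightarrow> ('i\<Rightarrow>real)" where
  "mop I M x = (\<lambda>i. \<Sum>k\<in>I. M i k * x k)"
definition eigv :: "'i set \<Rightarrow> ('i\<Rightarrow>'i\<Rightarrow>real) \<Rightarrow> real \<Rightarrow> bool" where
  "eigv I M e \<longleftrightarrow> (\<exists>v. (\<exists>i\<in>I. v i \<noteq> 0) \<and> (\<forall>i\<in>I. mop I M v i = e * v i))"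
definition symk :: "'i set \<Rightarrow> ('i\<Rightarrow>'i\<Rightarrow>real) \<Rightarrow> bool" where
  "symk I M \<longleftrightarrow> (\<forall>i\<in>I. \<forall>k\<in>I. M i k = M k i)"

lemma eig_finite:
  assumes "finite I"
  shows "finite {e. eigv I M e}"
proof -
  obtain h where h: "bij_betw h {0..<card I} I" using ex_bij_betw_nat_finite[OF assms] by blast
  define m where "m = card I"
  define A :: "real mat" where "A = mat m m (\<lambda>(r,c). M (h r) (h c))"
  have A: "A \<in> carrier_mat m m" unfolding A_def by simp
  have "{e. eigv I M e} \<subseteq> spectrum A"
  proof
    fix e assume "e \<in> {e. eigv I M e}"
    then obtain v where v: "\<exists>i\<in>I. v i \<noteq> 0" "\<forall>i\<in>I. mop I M v i = e * v i"
      unfolding eigv_def by auto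
    define vv where "vv = vec m (\<lambda>r. v (h r))"
    have vvc: "vv \<in> carrier_vec m" unfolding vv_def by simp
    have nz: "vv \<noteq> 0\<^sub>v m"
    proof
      assume z: "vv = 0\<^sub>v m"
      from v(1) obtain i where i: "i \<in> I" "v i \<noteq> 0" by auto
      then obtain r where r: "r < m" "h r = i" using h unfolding bij_betw_def m_def by (metis atLeastLessThan_iff imageE lessThan_atLeast0 lessThan_iff)
      have "vv $ r = 0" using z r by simp
      then show False using r i unfolding vv_def by simp
    qed
    have ev: "A *\<^sub>v vv = e \<cdot>\<^sub>v vv"
    proof (rule eq_vecI)
      fix r assume r: "r < dim_vec (e \<cdot>\<^sub>v vv)"
      hence r': "r < m" unfolding vv_def by simp
      have hr: "h r \<in> I" using h r' unfolding bij_betw_def m_def by auto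
      have "(A *\<^sub>v vv) $ r = (\<Sum>c\<in>{0..<m}. M (h r) (h c) * v (h c))"
        using r' unfolding A_def vv_def by (simp add: scalar_prod_def)
      also have "\<dots> = (\<Sum>k\<in>I. M (h r) k * v k)"
        using sum.reindex_bij_betw[OF h, of "\<lambda>k. M (h r) k * v k"] unfolding m_def by simp
      also have "\<dots> = e * v (h r)" using v(2) hr unfolding mop_def by simp
      finally show "(A *\<^sub>v vv) $ r = (e \<cdot>\<^sub>v vv) $ r" using r' unfolding vv_def by simp
    qed (simp add: A_def vv_def)
    have "eigenvector A vv e" unfolding eigenvector_def using A vvc nz ev by simp
    then show "e \<in> spectrum A" unfolding spectrum_def eigenvalue_def by auto
  qed
  then show ?thesis using card_finite_spectrum(1)[OF A] finite_subset by blast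
qed


lemma ip_sym: "ip I x y = ip I y x" unfolding ip_def by (simp add: mult.commute)

lemma mop_sym:
  assumes "symk I M"
  shows "ip I x (mop I M y) = ip I (mop I M x) y"
proof -
  have "ip I x (mop I M y) = (\<Sum>i\<in>I. \<Sum>k\<in>I. x i * M i k * y k)"
    unfolding ip_def mop_def by (simp add: sum_distrib_left mult.assoc)
  also have "\<dots> = (\<Sum>k\<in>I. \<Sum>i\<in>I. x i * M i k * y k)" by (rule sum.swap)
  also have "\<dots> = (\<Sum>k\<in>I. (\<Sum>i\<in>I. M k i * x i) * y k)"
    apply (intro sum.cong refl)
    apply (subst sum_distrib_right)
    apply (intro sum.cong refl)
    using assms by (auto simp: symk_def)
  also have "\<dots> = ip I (mop I M x) y" unfolding ip_def mop_def by simp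
  finally show ?thesis .
qed

lemma quad_le0:
  fixes b c :: real
  assumes "\<forall>t. 2 * t * b + t^2 * c \<le> 0"
  shows "b = 0"
proof (rule ccontr)
  assume b: "b \<noteq> 0"
  define t where "t = b / (\<bar>c\<bar> + 1)"
  have pos: "\<bar>c\<bar> + 1 > 0" by simp
  have bb: "b * b > 0" using b by (metis not_real_square_gt_zero)
  have tb: "t * b > 0" unfolding t_def using bb pos by simp
  have "t^2 * \<bar>c\<bar> = (t * b) * (\<bar>c\<bar> / (\<bar>c\<bar> + 1))"
    unfolding t_def using pos by (simp add: field_simps power2_eq_square)
  also have "\<dots> \<le> t * b" using tb pos by (intro mult_left_le) (auto simp: field_simps)
  finally have "t^2 * \<bar>c\<bar> \<le> t * b" .
  moreover have "t^2 * c \<ge> - (t^2 * \<bar>c\<bar>)" using mult_left_mono[of "-\<bar>c\<bar>" c "t^2"] by simp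
  ultimately have "2 * t * b + t^2 * c > 0" using tb by linarith
  then show False using assms by (meson not_le)
qed

lemma mop_lin: "mop I M (\<lambda>i. x i + t * h i) = (\<lambda>i. mop I M x i + t * mop I M h i)"
  unfolding mop_def by (simp add: distrib_left sum.distrib sum_distrib_left mult.left_commute)

lemma ip_lin: "ip I (\<lambda>i. a i + t * b i) (\<lambda>i. c i + t * d i)
   = ip I a c + t * ip I b c + t * ip I a d + t * t * ip I b d"
  unfolding ip_def by (simp add: distrib_left distrib_right sum.distrib sum_distrib_left mult_ac)

lemma ip_cong: "(\<And>i. i \<in> I \<Longrightarrow> x i = x' i) \<Longrightarrow> (\<And>i. i \<in> I \<Longrightarrow> y i = y' i) \<Longrightarrow> ip I x y = ip I x' y'"
  unfolding ip_def by simp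

lemma mop_cong: "(\<And>i. i \<in> I \<Longrightarrow> x i = x' i) \<Longrightarrow> mop I M x = mop I M x'"
  unfolding mop_def by (intro ext sum.cong) auto

lemma ip_nonneg: "ip I x x \<ge> 0" unfolding ip_def by (simp add: sum_nonneg)

lemma ip_zero: "finite I \<Longrightarrow> ip I x x = 0 \<Longrightarrow> i \<in> I \<Longrightarrow> x i = 0"
  unfolding ip_def by (simp add: sum_nonneg_eq_0_iff)

lemma ip_delta: "finite I \<Longrightarrow> i \<in> I \<Longrightarrow> ip I (\<lambda>j. if j = i then 1 else 0) x = x i"
proof -
  assume "finite I" "i \<in> I"
  have "ip I (\<lambda>j. if j = i then 1 else 0) x = (\<Sum>j\<in>I. if j = i then x j else 0)"
    unfolding ip_def by (intro sum.cong) auto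
  also have "\<dots> = x i" using \<open>finite I\<close> \<open>i \<in> I\<close> by simp
  finally show ?thesis .
qed

lemma mop_scale: "mop I M (\<lambda>i. c * y i) = (\<lambda>i. c * mop I M y i)"
  unfolding mop_def by (simp add: sum_distrib_left mult.left_commute)
lemma ip_scale: "ip I (\<lambda>i. c * y i) (\<lambda>i. d * z i) = c * d * ip I y z"
  unfolding ip_def by (simp add: sum_distrib_left mult_ac)
lemma top_eig:
  assumes fin: "finite I" and ne: "I \<noteq> {}" and sy: "symk I M"
  shows "\<exists>R. eigv I M R \<and> (\<forall>x. ip I x (mop I M x) \<le> R * ip I x x)"
proof -
  define S :: "'a \<Rightarrow> real set" where "S i = (if i \<in> I then {-1..1} else {0})" for i
  define f where "f x = ip I x (mop I M x)" for x
  define K where "K = {x. (\<forall>i. x i \<in> S i) \<and> ip I x x = 1}"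
  have cS: "compact (Pi\<^sub>E UNIV S)"
  proof -
    have "compactin (product_topology (\<lambda>i. euclidean) UNIV) (Pi\<^sub>E UNIV S)"
      unfolding compactin_PiE by (auto simp: S_def)
    then show ?thesis by (simp add: euclidean_product_topology compactin_euclidean_iff)
  qed
  have cont_ip: "continuous_on UNIV (\<lambda>x::'a\<Rightarrow>real. ip I x x)"
    unfolding ip_def by (intro continuous_intros continuous_on_product_coordinates)
  have "closed {x::'a\<Rightarrow>real. ip I x x = 1}"
    by (rule closed_Collect_eq[OF cont_ip continuous_on_const])
  moreover have "K = Pi\<^sub>E UNIV S \<inter> {x. ip I x x = 1}" unfolding K_def by auto
  ultimately have cK: "compact K" using cS compact_Int_closed by metis
  obtain i0 where i0: "i0 \<in> I" using ne by auto
  define e0 :: "'a \<Rightarrow> real" where "e0 i = (if i = i0 then 1 else 0)" for i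
  have "ip I e0 e0 = (\<Sum>i\<in>I. if i = i0 then 1 else 0)" unfolding ip_def e0_def
    by (intro sum.cong) auto
  also have "\<dots> = 1" using fin i0 by simp
  finally have "e0 \<in> K" unfolding K_def S_def e0_def using i0 by auto
  hence Kne: "K \<noteq> {}" by auto
  have cf: "continuous_on K f"
    unfolding f_def ip_def mop_def
    by (intro continuous_intros continuous_on_subset[OF continuous_on_product_coordinates]) auto
  obtain x0 where x0: "x0 \<in> K" "\<And>x. x \<in> K \<Longrightarrow> f x \<le> f x0"
    using continuous_attains_sup[OF cK Kne cf] by blast
  define R where "R = f x0"
  have ray: "f x \<le> R * ip I x x" for x
  proof -
    define y where "y i = (if i \<in> I then x i else 0)" for i
    have fy: "f y = f x" unfolding f_def y_def by (intro ip_cong) (auto simp: mop_def)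
    have iy: "ip I y y = ip I x x" unfolding y_def by (intro ip_cong) auto
    show ?thesis
    proof (cases "ip I y y = 0")
      case True
      hence yz: "\<And>i. i \<in> I \<Longrightarrow> y i = 0" using ip_zero[OF fin] by blast
      have "f y = 0" unfolding f_def ip_def by (intro sum.neutral) (simp add: yz)
      then show ?thesis using fy iy True by simp
    next
      case False
      hence pos: "ip I y y > 0" using ip_nonneg[of I y] by linarith
      define c where "c = 1 / sqrt (ip I y y)"
      define z where "z i = c * y i" for i
      have s2: "(sqrt (ip I y y))^2 = ip I y y" using pos by simp
      have c2: "c^2 * ip I y y = 1" unfolding c_def power_divide s2 using pos by simp
      have izz: "ip I z z = c^2 * ip I y y"
        unfolding z_def ip_scale by (simp add: power2_eq_square)
      have fz: "f z = c^2 * f y"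
        unfolding z_def f_def mop_scale ip_scale by (simp add: power2_eq_square)
      have "z \<in> K"
      proof -
        have "z i \<in> S i" for i
        proof (cases "i \<in> I")
          case True
          have "(z i)^2 \<le> ip I z z" unfolding ip_def
            using member_le_sum[OF True, of "\<lambda>i. z i * z i"] fin by (simp add: power2_eq_square)
          hence "(z i)^2 \<le> 1" using izz c2 by simp
          hence "\<bar>z i\<bar> \<le> 1" using abs_le_square_iff[of "z i" 1] by simp
          then show ?thesis using True unfolding S_def by auto
        next
          case False then show ?thesis unfolding S_def z_def y_def by simp
        qed
        then show ?thesis unfolding K_def using izz c2 by simp
      qed
      hence "f z \<le> R" using x0(2) R_def by simp
      hence "c^2 * f y \<le> c^2 * (R * ip I y y)" using fz c2 by (simp add: mult.left_commute)
      moreover have "c \<noteq> 0" using c2 by auto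
      hence "c^2 > 0" by simp
      ultimately have "f y \<le> R * ip I y y" by simp
      then show ?thesis using fy iy by simp
    qed
  qed
  have "eigv I M R"
  proof -
    have nz: "\<exists>i\<in>I. x0 i \<noteq> 0"
    proof (rule ccontr)
      assume "\<not> ?thesis"
      hence "ip I x0 x0 = 0" unfolding ip_def by simp
      then show False using x0(1) unfolding K_def by simp
    qed
    have "mop I M x0 i = R * x0 i" if i: "i \<in> I" for i
    proof -
      define h :: "'a \<Rightarrow> real" where "h j = (if j = i then 1 else 0)" for j
      define b where "b = mop I M x0 i - R * x0 i"
      define c where "c = f h - R * ip I h h"
      have "\<forall>t. 2 * t * b + t^2 * c \<le> 0"
      proof
        fix t
        define xt where "xt j = x0 j + t * h j" for j
        have e1: "f xt = f x0 + 2 * t * ip I h (mop I M x0) + t^2 * f h"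
        proof -
          have "f xt = f x0 + t * ip I h (mop I M x0) + t * ip I x0 (mop I M h) + t^2 * f h"
            unfolding f_def xt_def mop_lin ip_lin by (simp add: power2_eq_square)
          moreover have "ip I x0 (mop I M h) = ip I h (mop I M x0)"
            using mop_sym[OF sy] ip_sym by metis
          ultimately show ?thesis by simp
        qed
        have e2: "ip I xt xt = ip I x0 x0 + 2 * t * ip I h x0 + t^2 * ip I h h"
          unfolding xt_def ip_lin using ip_sym[of I x0 h] by (simp add: power2_eq_square)
        have "ip I h (mop I M x0) = mop I M x0 i" unfolding h_def using fin i by (rule ip_delta)
        moreover have "ip I h x0 = x0 i" unfolding h_def using fin i by (rule ip_delta)
        moreover have "f x0 = R * ip I x0 x0" using R_def x0(1) unfolding K_def by simp
        moreover have "f xt \<le> R * ip I xt xt" by (rule ray)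
        ultimately show "2 * t * b + t^2 * c \<le> 0" using e1 e2 unfolding b_def c_def
          by (simp add: algebra_simps)
      qed
      then have "b = 0" by (rule quad_le0)
      then show ?thesis unfolding b_def by simp
    qed
    then show ?thesis unfolding eigv_def using nz by blast
  qed
  then show ?thesis using ray unfolding f_def by blast
qed



lemma eig_le_ray:
  assumes "finite I" "eigv I M e" "\<forall>x. ip I x (mop I M x) \<le> U * ip I x x"
  shows "e \<le> U"
proof -
  obtain v where v: "\<exists>i\<in>I. v i \<noteq> 0" "\<forall>i\<in>I. mop I M v i = e * v i" using assms(2) unfolding eigv_def by auto
  have "ip I v (mop I M v) = e * ip I v v" unfolding ip_def using v(2) by (simp add: sum_distrib_left mult_ac)
  moreover have "ip I v v \<noteq> 0" using v(1) ip_zero[OF assms(1), of v] by blast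
  hence "ip I v v > 0" using ip_nonneg[of I v] by linarith
  ultimately show ?thesis using assms(3)[rule_format, of v] by simp
qed

lemma Max_eig:
  assumes fin: "finite I" and ne: "I \<noteq> {}" and sy: "symk I M"
  shows "eigv I M (Max {e. eigv I M e})" "\<forall>x. ip I x (mop I M x) \<le> Max {e. eigv I M e} * ip I x x"
proof -
  obtain R where R: "eigv I M R" "\<forall>x. ip I x (mop I M x) \<le> R * ip I x x" using top_eig[OF assms] by blast
  have "Max {e. eigv I M e} = R"
    by (rule Max_eqI) (use eig_finite[OF fin] R eig_le_ray[OF fin _ R(2)] in auto)
  then show "eigv I M (Max {e. eigv I M e})" "\<forall>x. ip I x (mop I M x) \<le> Max {e. eigv I M e} * ip I x x"
    using R by auto
qed


lemma ip_add_left: "ip I (\<lambda>i. x i + y i) z = ip I x z + ip I y z"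
  unfolding ip_def by (simp add: distrib_right sum.distrib)
lemma ip_add_right: "ip I z (\<lambda>i. x i + y i) = ip I z x + ip I z y"
  unfolding ip_def by (simp add: distrib_left sum.distrib)
lemma ip_diff_left: "ip I (\<lambda>i. x i - y i) z = ip I x z - ip I y z"
  unfolding ip_def by (simp add: left_diff_distrib sum_subtractf)
lemma ip_diff_right: "ip I z (\<lambda>i. x i - y i) = ip I z x - ip I z y"
  unfolding ip_def by (simp add: right_diff_distrib sum_subtractf)
lemma ip_scale_left: "ip I (\<lambda>i. c * x i) z = c * ip I x z"
  unfolding ip_def by (simp add: sum_distrib_left mult.assoc)
lemma ip_scale_right: "ip I z (\<lambda>i. c * x i) = c * ip I z x"
  unfolding ip_def by (simp add: sum_distrib_left mult.left_commute)
lemma ip_const_left: "ip I (\<lambda>i. c) z = c * ip I (\<lambda>i. 1) z"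
  unfolding ip_def by (simp add: sum_distrib_left)
lemma mop_add: "mop I M (\<lambda>i. x i + y i) = (\<lambda>i. mop I M x i + mop I M y i)"
  unfolding mop_def by (simp add: distrib_left sum.distrib)
lemma mop_diff: "mop I M (\<lambda>i. x i - y i) = (\<lambda>i. mop I M x i - mop I M y i)"
  unfolding mop_def by (simp add: right_diff_distrib sum_subtractf)
lemma mop_const: "mop I M (\<lambda>i. c) = (\<lambda>i. c * mop I M (\<lambda>_. 1) i)"
  unfolding mop_def by (simp add: sum_distrib_left mult.commute)
lemma ip_one_one: "ip I (\<lambda>i. 1) (\<lambda>i. 1) = real (card I)"
  unfolding ip_def by simp
lemma ip_mop_cong: "(\<And>i. i \<in> I \<Longrightarrow> mop I M x i = z i) \<Longrightarrow> ip I y (mop I M x) = ip I y z"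
  unfolding ip_def by simp

lemma sq_abs_le: "(x::real)^2 \<le> c \<Longrightarrow> \<bar>x\<bar> \<le> sqrt c"
  using real_sqrt_le_mono by fastforce

lemma comp_le_ip: "finite I \<Longrightarrow> i \<in> I \<Longrightarrow> (x i)^2 \<le> ip I x x"
  unfolding ip_def using member_le_sum[of i I "\<lambda>i. x i * x i"] by (simp add: power2_eq_square)


lemma amgm: "(g::real) > 0 \<Longrightarrow> c * (p * q) \<le> g / 2 * p^2 + c^2 / (2 * g) * q^2"
proof -
  assume g: "g > 0"
  have e: "2*g*(g/2*p^2 + c^2/(2*g)*q^2) - 2*g*(c*(p*q)) = (g*p - c*q)^2"
    using g by (simp add: field_simps power2_eq_square)
  have "0 \<le> (g*p - c*q)^2" by simp
  hence "2*g*(c*(p*q)) \<le> 2*g*(g/2*p^2 + c^2/(2*g)*q^2)" using e by linarith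
  then show ?thesis using g by simp
qed

lemma amgm_ip: "(g::real) > 0 \<Longrightarrow> c * ip I p q \<le> g / 2 * ip I p p + c^2 / (2 * g) * ip I q q"
proof -
  assume g: "g > 0"
  have "c * ip I p q = (\<Sum>i\<in>I. c * (p i * q i))" unfolding ip_def by (simp add: sum_distrib_left)
  also have "\<dots> \<le> (\<Sum>i\<in>I. g / 2 * (p i)^2 + c^2 / (2 * g) * (q i)^2)"
    by (intro sum_mono amgm[OF g])
  also have "\<dots> = g / 2 * ip I p p + c^2 / (2 * g) * ip I q q"
    unfolding ip_def by (simp add: sum.distrib sum_distrib_left power2_eq_square)
  finally show ?thesis .
qed

lemma sq_sum_le: "ip I (\<lambda>i. z i + w i) (\<lambda>i. z i + w i) \<le> 2 * ip I z z + 2 * ip I w w"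
proof -
  have "ip I (\<lambda>i. z i + w i) (\<lambda>i. z i + w i) = (\<Sum>i\<in>I. (z i + w i)^2)" unfolding ip_def by (simp add: power2_eq_square)
  also have "\<dots> \<le> (\<Sum>i\<in>I. 2 * (z i)^2 + 2 * (w i)^2)"
  proof (intro sum_mono)
    fix i have "0 \<le> (z i - w i)^2" by simp
    then show "(z i + w i)^2 \<le> 2 * (z i)^2 + 2 * (w i)^2" by (simp add: power2_eq_square algebra_simps)
  qed
  also have "\<dots> = 2 * ip I z z + 2 * ip I w w"
    unfolding ip_def by (simp add: sum.distrib sum_distrib_left power2_eq_square)
  finally show ?thesis .
qed

locale pert =
  fixes I :: "'i set" and M0 :: "'i \<Rightarrow> 'i \<Rightarrow> real" and b :: "'i \<Rightarrow> real" and gam :: real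
  assumes fin: "finite I" and ne: "I \<noteq> {}" and sy: "symk I M0"
    and M0one: "\<And>i. i \<in> I \<Longrightarrow> mop I M0 (\<lambda>_. 1) i = 0"
    and gpos: "gam > 0"
    and gap: "\<And>z. ip I z (\<lambda>_. 1) = 0 \<Longrightarrow> ip I z (mop I M0 z) \<le> - gam * ip I z z"
    and bnn: "\<And>i. i \<in> I \<Longrightarrow> b i \<ge> 0"
begin

definition "nn = real (card I)"
definition "bet = (\<Sum>i\<in>I. b i) / nn"
definition "Mth th = (\<lambda>i k. M0 i k - (if i = k then th * b i else 0))"
definition "Rt th = Max {e. eigv I (Mth th) e}"
definition "DD x y = (\<Sum>i\<in>I. b i * x i * y i)"
definition "uu i = b i - bet"

lemma nn_pos: "nn > 0" using fin ne unfolding nn_def by (simp add: card_gt_0_iff)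

lemma sum_b: "(\<Sum>i\<in>I. b i) = nn * bet" using nn_pos unfolding bet_def by simp

lemma bet_nn: "bet \<ge> 0" unfolding bet_def using bnn nn_pos by (simp add: sum_nonneg)

lemma DD_nn: "DD y y \<ge> 0" unfolding DD_def
proof (intro sum_nonneg)
  fix i assume "i \<in> I"
  then have "0 \<le> b i * (y i * y i)" using bnn by simp
  then show "0 \<le> b i * y i * y i" by (simp add: mult.assoc)
qed

lemma ip_one: "ip I (\<lambda>_. 1) (\<lambda>_. 1) = nn" unfolding nn_def by (rule ip_one_one)

lemma mop_Mth: "i \<in> I \<Longrightarrow> mop I (Mth th) x i = mop I M0 x i - th * (b i * x i)"
proof -
  assume i: "i \<in> I"
  have "mop I (Mth th) x i = (\<Sum>k\<in>I. M0 i k * x k - (if i = k then th * b i * x k else 0))"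
    unfolding mop_def Mth_def by (intro sum.cong) (auto simp: algebra_simps)
  also have "\<dots> = mop I M0 x i - th * (b i * x i)"
    using fin i by (simp add: sum_subtractf mop_def)
  finally show ?thesis .
qed

lemma symMth: "symk I (Mth th)" using sy unfolding symk_def Mth_def by auto

lemma Rt_eig: "eigv I (Mth th) (Rt th)"
  using Max_eig(1)[OF fin ne symMth] unfolding Rt_def by auto

lemma Rt_ray: "ip I x (mop I (Mth th) x) \<le> Rt th * ip I x x"
  using Max_eig(2)[OF fin ne symMth] unfolding Rt_def by auto

lemma Rt_upper: "(\<And>x. ip I x (mop I (Mth th) x) \<le> U * ip I x x) \<Longrightarrow> Rt th \<le> U"
  using eig_le_ray[OF fin Rt_eig] by blast

lemma Q_eq: "ip I x (mop I (Mth th) x) = ip I x (mop I M0 x) - th * DD x x"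
proof -
  have "ip I x (mop I (Mth th) x) = ip I x (\<lambda>i. mop I M0 x i - th * (b i * x i))"
    by (rule ip_mop_cong[OF mop_Mth])
  also have "\<dots> = ip I x (mop I M0 x) - th * DD x x"
    unfolding ip_diff_right ip_scale_right by (simp add: ip_def DD_def mult_ac)
  finally show ?thesis .
qed

lemma M0_one_left: "ip I (\<lambda>_. 1) (mop I M0 y) = 0"
proof -
  have "ip I (\<lambda>_. 1) (mop I M0 y) = ip I (mop I M0 (\<lambda>_. 1)) y" by (rule mop_sym[OF sy])
  also have "\<dots> = ip I (\<lambda>_. 0) y" by (rule ip_cong) (auto simp: M0one)
  also have "\<dots> = 0" unfolding ip_def by simp
  finally show ?thesis .
qed

lemma M0_shift:
  assumes "ip I y (\<lambda>_. 1) = 0"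
  shows "ip I (\<lambda>i. a + y i) (mop I M0 (\<lambda>i. a + y i)) = ip I y (mop I M0 y)"
proof -
  have m: "mop I M0 (\<lambda>i. a + y i) i = mop I M0 y i" if "i \<in> I" for i
    unfolding mop_add mop_const[of I M0 a] using M0one[OF that] by simp
  have "ip I (\<lambda>i. a + y i) (mop I M0 (\<lambda>i. a + y i)) = ip I (\<lambda>i. a + y i) (mop I M0 y)"
    by (rule ip_mop_cong[OF m])
  also have "\<dots> = a * ip I (\<lambda>_. 1) (mop I M0 y) + ip I y (mop I M0 y)"
    unfolding ip_add_left ip_const_left[of I a] by simp
  finally show ?thesis using M0_one_left by simp
qed

lemma ipb: "(\<Sum>i\<in>I. b i * y i) = ip I uu y + bet * ip I y (\<lambda>_. 1)"
  unfolding ip_def uu_def by (simp add: algebra_simps sum.distrib sum_subtractf sum_distrib_left sum_distrib_right)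

lemma DD_shift:
  assumes "ip I y (\<lambda>_. 1) = 0"
  shows "DD (\<lambda>i. a + y i) (\<lambda>i. a + y i) = a^2 * nn * bet + 2 * a * ip I uu y + DD y y"
proof -
  have "DD (\<lambda>i. a + y i) (\<lambda>i. a + y i) = (\<Sum>i\<in>I. a^2 * b i + 2 * a * (b i * y i) + b i * y i * y i)"
    unfolding DD_def by (intro sum.cong) (auto simp: algebra_simps power2_eq_square)
  also have "\<dots> = a^2 * (\<Sum>i\<in>I. b i) + 2 * a * (\<Sum>i\<in>I. b i * y i) + DD y y"
    unfolding DD_def by (simp add: sum.distrib sum_distrib_left)
  finally show ?thesis using ipb assms sum_b by (simp add: mult_ac)
qed

lemma ip_shift:
  assumes "ip I y (\<lambda>_. 1) = 0"
  shows "ip I (\<lambda>i. a + y i) (\<lambda>i. a + y i) = a^2 * nn + ip I y y"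
proof -
  have "ip I (\<lambda>i. a + y i) (\<lambda>i. a + y i) = (\<Sum>i\<in>I. a*a + (2*a) * y i + y i * y i)"
    unfolding ip_def by (intro sum.cong) (auto simp: algebra_simps)
  also have "\<dots> = real (card I) * (a*a) + (2*a) * (\<Sum>i\<in>I. y i) + (\<Sum>i\<in>I. y i * y i)"
    by (simp add: sum.distrib sum_distrib_left)
  also have "(\<Sum>i\<in>I. y i) = 0" using assms unfolding ip_def by simp
  finally show ?thesis unfolding nn_def ip_def by (simp add: power2_eq_square)
qed

lemma decomp:
  fixes x
  defines "a \<equiv> ip I x (\<lambda>_. 1) / nn"
  shows "x = (\<lambda>i. a + (x i - a))" "ip I (\<lambda>i. x i - a) (\<lambda>_. 1) = 0"
proof -
  show "x = (\<lambda>i. a + (x i - a))" by simp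
  have "ip I (\<lambda>i. x i - a) (\<lambda>_. 1) = ip I x (\<lambda>_. 1) - a * nn"
    unfolding ip_diff_left ip_const_left[of I a] ip_one ..
  then show "ip I (\<lambda>i. x i - a) (\<lambda>_. 1) = 0" unfolding a_def using nn_pos by simp
qed

lemma Q_shift:
  assumes "ip I y (\<lambda>_. 1) = 0"
  shows "ip I (\<lambda>i. a + y i) (mop I (Mth th) (\<lambda>i. a + y i))
     = ip I y (mop I M0 y) - th * (a^2 * nn * bet + 2 * a * ip I uu y + DD y y)"
  unfolding Q_eq M0_shift[OF assms] DD_shift[OF assms] ..

lemma Rt_lower1: "Rt th \<ge> - th * bet"
proof -
  have "ip I (\<lambda>i. 1 + 0) (mop I (Mth th) (\<lambda>i. 1 + 0)) = - th * (nn * bet)"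
    using Q_shift[of "\<lambda>_. 0" 1 th] by (simp add: ip_def DD_def)
  moreover have "ip I (\<lambda>i. 1 + 0) (\<lambda>i. 1 + 0) = nn" using ip_one by simp
  ultimately have "- th * (nn * bet) \<le> Rt th * nn" using Rt_ray[of "\<lambda>i. 1 + 0" th] by simp
  moreover have "th * (nn * bet) = (th * bet) * nn" by (simp only: mult_ac)
  ultimately have "(- (th * bet)) * nn \<le> Rt th * nn" by simp
  then show ?thesis using mult_right_le_imp_le[OF _ nn_pos] by fastforce
qed

lemma Rt_upper1:
  assumes th: "th \<ge> 0" "2 * th * bet \<le> gam"
  shows "Rt th \<le> - th * bet + th^2 * (2 * ip I uu uu / (gam * nn))"
proof (rule Rt_upper)
  fix x
  define a where "a = ip I x (\<lambda>_. 1) / nn"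
  define y where "y i = x i - a" for i
  have xe: "x = (\<lambda>i. a + y i)" and yp: "ip I y (\<lambda>_. 1) = 0"
    using decomp[of x] unfolding a_def y_def by auto
  have Q: "ip I x (mop I (Mth th) x) = ip I y (mop I M0 y) - th * (a^2 * nn * bet + 2 * a * ip I uu y + DD y y)"
    unfolding xe by (rule Q_shift[OF yp])
  have X: "ip I x x = a^2 * nn + ip I y y" unfolding xe by (rule ip_shift[OF yp])
  have g: "ip I y (mop I M0 y) \<le> - gam * ip I y y" using gap[OF yp] .
  have am: "(-2 * th * a) * ip I uu y \<le> gam / 2 * ip I y y + (-2 * th * a)^2 / (2 * gam) * ip I uu uu"
    using amgm_ip[OF gpos, of "-2 * th * a" I y uu] ip_sym[of I y uu] by simp
  have d: "th * DD y y \<ge> 0" using DD_nn th by simp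
  have "th * bet \<le> gam / 2" using th by simp
  hence b1: "th * bet * ip I y y \<le> gam / 2 * ip I y y" using ip_nonneg[of I y] by (rule mult_right_mono)
  have e2: "(-2 * th * a)^2 / (2 * gam) * ip I uu uu = th^2 * (2 * ip I uu uu / (gam * nn)) * (a^2 * nn)"
    using nn_pos gpos by (simp add: field_simps power2_eq_square)
  have e3: "th^2 * (2 * ip I uu uu / (gam * nn)) * (a^2 * nn) \<le> th^2 * (2 * ip I uu uu / (gam * nn)) * ip I x x"
    unfolding X using ip_nonneg[of I y] ip_nonneg[of I uu] nn_pos gpos
    by (intro mult_left_mono) (auto intro!: divide_nonneg_pos)
  show "ip I x (mop I (Mth th) x) \<le> (- th * bet + th^2 * (2 * ip I uu uu / (gam * nn))) * ip I x x"
  proof -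
    have q2: "ip I x (mop I (Mth th) x) = ip I y (mop I M0 y) - th * bet * (a^2 * nn) + (-2 * th * a) * ip I uu y - th * DD y y"
      unfolding Q by (simp add: algebra_simps)
    have r2: "(- th * bet + th^2 * (2 * ip I uu uu / (gam * nn))) * ip I x x
       = - th * bet * (a^2 * nn) - th * bet * ip I y y + th^2 * (2 * ip I uu uu / (gam * nn)) * ip I x x"
      unfolding X by (simp add: algebra_simps)
    show ?thesis unfolding q2 r2 using g am d b1 e2 e3 by linarith
  qed
qed


lemma mop_shift: "i \<in> I \<Longrightarrow> mop I M0 (\<lambda>i. a + y i) i = mop I M0 y i"
  unfolding mop_add mop_const[of I M0 a] using M0one by simp

lemma ip_ab: "ip I (\<lambda>i. x i + t * y i) (\<lambda>i. x i + t * y i) \<le> 2 * ip I x x + 2 * t^2 * ip I y y"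
  using sq_sum_le[of I x "\<lambda>i. t * y i"] unfolding ip_scale_left ip_scale_right by (simp add: power2_eq_square)

context
  fixes w
  assumes wperp: "ip I w (\<lambda>_. 1) = 0" and wM: "\<And>i. i \<in> I \<Longrightarrow> mop I M0 w i = uu i"
begin

definition "cc = - ip I w uu / nn"

lemma ipwu: "ip I w uu = - cc * nn" unfolding cc_def using nn_pos by simp

lemma cc_nn: "cc \<ge> 0"
proof -
  have "ip I w uu = ip I w (mop I M0 w)" by (rule ip_mop_cong[OF wM, symmetric])
  also have "\<dots> \<le> - gam * ip I w w" by (rule gap[OF wperp])
  also have "\<dots> \<le> 0" using gpos ip_nonneg[of I w] by (simp add: mult_nonneg_nonneg)
  finally show ?thesis unfolding cc_def using nn_pos by (simp add: divide_nonpos_pos)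
qed

lemma M0_pert:
  "ip I (\<lambda>i. z i + t * w i) (mop I M0 (\<lambda>i. z i + t * w i))
     = ip I z (mop I M0 z) + 2 * t * ip I uu z + t^2 * ip I w uu"
proof -
  have "mop I M0 (\<lambda>i. z i + t * w i) = (\<lambda>i. mop I M0 z i + t * mop I M0 w i)"
    by (rule mop_lin)
  hence "ip I (\<lambda>i. z i + t * w i) (mop I M0 (\<lambda>i. z i + t * w i))
     = ip I z (mop I M0 z) + t * ip I w (mop I M0 z) + t * ip I z (mop I M0 w) + t * t * ip I w (mop I M0 w)"
    using ip_lin[of I z t w "mop I M0 z" "mop I M0 w"] by simp
  moreover have "ip I z (mop I M0 w) = ip I uu z" using ip_mop_cong[OF wM, of z] ip_sym by metis
  moreover have "ip I w (mop I M0 z) = ip I uu z"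
  proof -
    have "ip I w (mop I M0 z) = ip I (mop I M0 w) z" by (rule mop_sym[OF sy])
    also have "\<dots> = ip I uu z" by (rule ip_cong) (auto simp: wM)
    finally show ?thesis .
  qed
  moreover have "ip I w (mop I M0 w) = ip I w uu" by (rule ip_mop_cong[OF wM])
  ultimately show ?thesis by (simp add: power2_eq_square)
qed

lemma Rt_upper2:
  assumes th: "th \<ge> 0" "2 * th * bet \<le> gam"
  shows "Rt th \<le> - th * bet + th^2 * cc + th^3 * (2 * bet * ip I w w / nn)"
proof (rule Rt_upper)
  fix x
  define a where "a = ip I x (\<lambda>_. 1) / nn"
  define y where "y i = x i - a" for i
  define z where "z i = y i - (th * a) * w i" for i
  define C2 where "C2 = 2 * bet * ip I w w / nn"
  have xe: "x = (\<lambda>i. a + y i)" and yp: "ip I y (\<lambda>_. 1) = 0"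
    using decomp[of x] unfolding a_def y_def by auto
  have ye: "y = (\<lambda>i. z i + (th * a) * w i)" unfolding z_def by simp
  have zp: "ip I z (\<lambda>_. 1) = 0"
    unfolding z_def ip_diff_left ip_scale_left yp wperp by simp
  have Q: "ip I x (mop I (Mth th) x) = ip I y (mop I M0 y) - th * (a^2 * nn * bet + 2 * a * ip I uu y + DD y y)"
    unfolding xe by (rule Q_shift[OF yp])
  have X: "ip I x x = a^2 * nn + ip I y y" unfolding xe by (rule ip_shift[OF yp])
  have yM: "ip I y (mop I M0 y) = ip I z (mop I M0 z) + 2 * (th * a) * ip I uu z + (th * a)^2 * ip I w uu"
    unfolding ye by (rule M0_pert)
  have uy: "ip I uu y = ip I uu z + (th * a) * ip I uu w"
    unfolding ye ip_add_right ip_scale_right ..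
  have uw: "ip I uu w = - cc * nn" using ipwu ip_sym by metis
  have g: "ip I z (mop I M0 z) \<le> - (gam * ip I z z)" using gap[OF zp] by simp
  have Yb: "ip I y y \<le> 2 * ip I z z + 2 * (th * a)^2 * ip I w w" unfolding ye by (rule ip_ab)
  have Zn: "ip I z z \<ge> 0" "ip I y y \<ge> 0" "ip I w w \<ge> 0" by (rule ip_nonneg)+
  have d: "th * DD y y \<ge> 0" using DD_nn th by simp
  have c1: "th^2 * cc * ip I y y \<ge> 0" using cc_nn Zn by simp
  have c2: "th^3 * C2 * ip I y y \<ge> 0" unfolding C2_def using bet_nn Zn nn_pos th by simp
  have b1: "th * bet * ip I y y \<le> th * bet * (2 * ip I z z + 2 * (th * a)^2 * ip I w w)"
    using Yb th bet_nn by (simp add: mult_left_mono)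
  have b2: "2 * th * bet * ip I z z \<le> gam * ip I z z" using th Zn by (simp add: mult_right_mono)
  have c3: "th^3 * C2 * (a^2 * nn) = 2 * th^3 * bet * a^2 * ip I w w"
    unfolding C2_def using nn_pos by (simp add: field_simps)
  have Qe: "ip I x (mop I (Mth th) x) = ip I z (mop I M0 z) + th^2 * cc * a^2 * nn - th * bet * a^2 * nn - th * DD y y"
    unfolding Q yM uy uw ipwu by (simp add: algebra_simps power2_eq_square)
  have Re: "(- th * bet + th^2 * cc + th^3 * C2) * ip I x x
     = - th * bet * a^2 * nn - th * bet * ip I y y + th^2 * cc * a^2 * nn + th^2 * cc * ip I y y
       + th^3 * C2 * (a^2 * nn) + th^3 * C2 * ip I y y"
    unfolding X by (simp add: algebra_simps)
  have e4: "th * bet * (2 * ip I z z + 2 * (th * a)^2 * ip I w w) = 2 * th * bet * ip I z z + 2 * th^3 * bet * a^2 * ip I w w"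
    by (simp add: algebra_simps power2_eq_square power3_eq_cube)
  show "ip I x (mop I (Mth th) x) \<le> (- th * bet + th^2 * cc + th^3 * (2 * bet * ip I w w / nn)) * ip I x x"
    unfolding C2_def[symmetric] Qe Re using g d c1 c2 b1 b2 c3 e4 by linarith
qed

lemma Rt_lower2:
  assumes th: "th \<ge> 0" "th \<le> 1"
  shows "Rt th \<ge> - th * bet + th^2 * cc - th^3 * ((DD w w + cc * ip I w w) / nn)"
proof -
  define K where "K = (DD w w + cc * ip I w w) / nn"
  define y where "y i = th * w i" for i
  define x where "x i = 1 + y i" for i
  have yp: "ip I y (\<lambda>_. 1) = 0" unfolding y_def ip_scale_left wperp by simp
  have Q: "ip I x (mop I (Mth th) x) = ip I y (mop I M0 y) - th * (1^2 * nn * bet + 2 * 1 * ip I uu y + DD y y)"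
    unfolding x_def by (rule Q_shift[OF yp])
  have X: "ip I x x = 1^2 * nn + ip I y y" unfolding x_def by (rule ip_shift[OF yp])
  have yM: "ip I y (mop I M0 y) = th^2 * ip I w uu"
  proof -
    have "ip I y (mop I M0 y) = th * th * ip I w (mop I M0 w)"
      unfolding y_def mop_scale ip_scale_left ip_scale_right by simp
    also have "ip I w (mop I M0 w) = ip I w uu" by (rule ip_mop_cong[OF wM])
    finally show ?thesis by (simp add: power2_eq_square)
  qed
  have uy: "ip I uu y = th * ip I uu w" unfolding y_def ip_scale_right ..
  have uw: "ip I uu w = - cc * nn" using ipwu ip_sym by metis
  have Dy: "DD y y = th^2 * DD w w" unfolding y_def DD_def by (simp add: sum_distrib_left power2_eq_square mult_ac)
  have yy: "ip I y y = th^2 * ip I w w" unfolding y_def ip_scale_left ip_scale_right by (simp add: power2_eq_square)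
  have Qe: "ip I x (mop I (Mth th) x) = th^2 * cc * nn - th * nn * bet - th^3 * DD w w"
    unfolding Q yM uy uw Dy ipwu by (simp add: algebra_simps power2_eq_square power3_eq_cube)
  have Xe: "ip I x x = nn + th^2 * ip I w w" unfolding X yy by simp
  have Xp: "ip I x x > 0" unfolding Xe using nn_pos ip_nonneg[of I w] by (simp add: add_pos_nonneg)
  have Kn: "K \<ge> 0" unfolding K_def using DD_nn cc_nn ip_nonneg[of I w] nn_pos by simp
  have KK: "K * nn = DD w w + cc * ip I w w" unfolding K_def using nn_pos by simp
  have "ip I x (mop I (Mth th) x) - (- th * bet + th^2 * cc - th^3 * K) * ip I x x
      = th^3 * cc * ip I w w * (1 - th) + th^3 * bet * ip I w w + th^5 * K * ip I w w"
  proof -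
    have DDw: "DD w w = K * nn - cc * ip I w w" using KK by simp
    show ?thesis unfolding Qe Xe DDw by (simp add: algebra_simps power2_eq_square power3_eq_cube numeral_eq_Suc)
  qed
  moreover have "th^3 * cc * ip I w w * (1 - th) \<ge> 0" using th cc_nn ip_nonneg[of I w] by simp
  moreover have "th^3 * bet * ip I w w \<ge> 0" using th bet_nn ip_nonneg[of I w] by simp
  moreover have "th^5 * K * ip I w w \<ge> 0" using th Kn ip_nonneg[of I w] by simp
  ultimately have "(- th * bet + th^2 * cc - th^3 * K) * ip I x x \<le> ip I x (mop I (Mth th) x)" by linarith
  also have "\<dots> \<le> Rt th * ip I x x" by (rule Rt_ray)
  finally show ?thesis unfolding K_def[symmetric] using Xp mult_right_le_imp_le by blast
qed


lemma eig_rel: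
  assumes ev: "\<And>i. i \<in> I \<Longrightarrow> mop I (Mth th) W i = e * W i"
    and We: "W = (\<lambda>i. a + y i)" and yp: "ip I y (\<lambda>_. 1) = 0"
    and ze: "z = (\<lambda>i. y i - (th * a) * w i)"
  shows "ip I z (mop I M0 z) = th * DD z y + e * ip I z y"
proof -
  have zp: "ip I z (\<lambda>_. 1) = 0"
    unfolding ze ip_diff_left ip_scale_left yp wperp by simp
  have mz: "mop I M0 z i = th * (b i * (a + y i)) + e * (a + y i) - th * a * uu i" if i: "i \<in> I" for i
  proof -
    have "mop I M0 z i = mop I M0 y i - th * a * mop I M0 w i"
      unfolding ze mop_diff mop_scale by simp
    also have "mop I M0 y i = mop I M0 W i" unfolding We using mop_shift[OF i] by simp
    also have "mop I M0 W i = th * (b i * W i) + e * W i" using ev[OF i] mop_Mth[OF i, of th W] by simp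
    finally show ?thesis using wM[OF i] unfolding We by simp
  qed
  have "ip I z (mop I M0 z) = (\<Sum>i\<in>I. z i * (th * (b i * (a + y i)) + e * (a + y i) - th * a * uu i))"
    unfolding ip_def using mz by simp
  also have "\<dots> = th * a * (\<Sum>i\<in>I. b i * z i) + th * DD z y + e * a * (\<Sum>i\<in>I. z i) + e * ip I z y - th * a * ip I z uu"
    unfolding DD_def ip_def
    by (simp add: algebra_simps sum.distrib sum_subtractf sum_distrib_left)
  also have "(\<Sum>i\<in>I. b i * z i) = ip I uu z" using ipb[of z] zp by simp
  also have "(\<Sum>i\<in>I. z i) = 0" using zp unfolding ip_def by simp
  finally show ?thesis using ip_sym[of I z uu] by simp
qed

lemma eigvec_bound:
  assumes K: "K \<ge> 0"
  shows "\<exists>C th0. th0 > 0 \<and> (\<forall>th e W. 0 < th \<and> th \<le> th0 \<and> \<bar>e\<bar> \<le> K * th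
     \<and> (\<forall>i\<in>I. mop I (Mth th) W i = e * W i) \<and> ip I W W = 1 \<and> ip I W (\<lambda>_. 1) > 0
     \<longrightarrow> (\<forall>i\<in>I. \<bar>W i - (1 / sqrt nn) * (1 + th * w i)\<bar> \<le> C * th^2))"
proof -
  define B2 where "B2 = (\<Sum>i\<in>I. (b i)^2)"
  define kap where "kap = 2 * (B2 + K^2) / gam^2"
  define th0 where "th0 = min 1 (1 / (4 * kap + 1))"
  define Wn where "Wn = ip I w w"
  define C3 where "C3 = 4 * kap * Wn / nn"
  define C4 where "C4 = 2 * C3 + 2 * Wn / nn"
  define s where "s = 1 / sqrt nn"
  define C where "C = C4 / (nn * s) * (1 + sqrt Wn) + sqrt C3"
  have B2n: "B2 \<ge> 0" unfolding B2_def by (simp add: sum_nonneg)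
  have kapn: "kap \<ge> 0" unfolding kap_def using B2n by simp
  have Wnn: "Wn \<ge> 0" unfolding Wn_def by (rule ip_nonneg)
  have C3n: "C3 \<ge> 0" unfolding C3_def using kapn Wnn nn_pos by simp
  have spos: "s > 0" unfolding s_def using nn_pos by simp
  have s2: "s^2 * nn = 1" unfolding s_def using nn_pos by (simp add: power_divide)
  have th0p: "th0 > 0" unfolding th0_def using kapn by simp
  have main: "\<bar>W i - (1 / sqrt nn) * (1 + th * w i)\<bar> \<le> C * th^2"
    if th: "0 < th" "th \<le> th0" and eb: "\<bar>e\<bar> \<le> K * th"
      and ev: "\<forall>i\<in>I. mop I (Mth th) W i = e * W i" and W1: "ip I W W = 1"
      and Wp: "ip I W (\<lambda>_. 1) > 0" and i: "i \<in> I" for th e W i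
  proof -
    have th1: "th \<le> 1" using th unfolding th0_def by simp
    have thk: "th^2 * kap \<le> 1/4"
    proof -
      have "th \<le> 1 / (4 * kap + 1)" using th unfolding th0_def by simp
      hence "th * (4 * kap + 1) \<le> 1" using kapn by (simp add: field_simps)
      hence "th * kap \<le> 1/4" using th kapn by (simp add: algebra_simps)
      moreover have "th^2 * kap \<le> th * kap" using th th1 kapn
        by (simp add: power2_eq_square mult_right_le_one_le mult_left_le_one_le mult_right_mono)
      ultimately show ?thesis by linarith
    qed
    define a where "a = ip I W (\<lambda>_. 1) / nn"
    define y where "y i = W i - a" for i
    define z where "z i = y i - (th * a) * w i" for i
    have apos: "a > 0" unfolding a_def using Wp nn_pos by simp
    have We: "W = (\<lambda>i. a + y i)" and yp: "ip I y (\<lambda>_. 1) = 0"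
      using decomp[of W] unfolding a_def y_def by auto
    have ze: "z = (\<lambda>i. y i - (th * a) * w i)" unfolding z_def by simp
    have ye: "y = (\<lambda>i. z i + (th * a) * w i)" unfolding z_def by simp
    have zp: "ip I z (\<lambda>_. 1) = 0"
      unfolding ze ip_diff_left ip_scale_left yp wperp by simp
    define Z where "Z = ip I z z"
    define Y where "Y = ip I y y"
    have Zn: "Z \<ge> 0" and Yn: "Y \<ge> 0" unfolding Z_def Y_def by (rule ip_nonneg)+
    have WW: "a^2 * nn + Y = 1" using W1 ip_shift[OF yp, of a] unfolding Y_def We by simp
    have ER: "ip I z (mop I M0 z) = th * DD z y + e * ip I z y"
      using eig_rel[OF _ We yp ze] ev by blast
    have g: "ip I z (mop I M0 z) \<le> - gam * Z" unfolding Z_def using gap[OF zp] .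
    have t1: "- th * DD z y \<le> gam / 4 * Z + th^2 * B2 / gam * Y"
    proof -
      have "- th * DD z y = (\<Sum>j\<in>I. (- th * b j) * (z j * y j))"
        unfolding DD_def by (simp add: sum_distrib_left mult_ac)
      also have "\<dots> \<le> (\<Sum>j\<in>I. (gam/2) / 2 * (z j)^2 + (- th * b j)^2 / (2 * (gam/2)) * (y j)^2)"
        using gpos by (intro sum_mono amgm) simp
      also have "\<dots> = gam / 4 * Z + th^2 / gam * (\<Sum>j\<in>I. (b j)^2 * (y j)^2)"
        unfolding Z_def ip_def by (simp add: sum.distrib sum_distrib_left power2_eq_square mult_ac)
      finally have t1a: "- th * DD z y \<le> gam / 4 * Z + th^2 / gam * (\<Sum>j\<in>I. (b j)^2 * (y j)^2)" .
      have "(\<Sum>j\<in>I. (b j)^2 * (y j)^2) \<le> (\<Sum>j\<in>I. B2 * (y j)^2)"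
      proof (intro sum_mono mult_right_mono)
        fix j assume j: "j \<in> I"
        show "(b j)^2 \<le> B2" unfolding B2_def using member_le_sum[OF j, of "\<lambda>j. (b j)^2"] fin by simp
      qed simp
      also have "(\<Sum>j\<in>I. B2 * (y j)^2) = B2 * Y" unfolding Y_def ip_def by (simp add: sum_distrib_left power2_eq_square)
      finally have "th^2 / gam * (\<Sum>j\<in>I. (b j)^2 * (y j)^2) \<le> th^2 / gam * (B2 * Y)"
        using gpos by (intro mult_left_mono) auto
      then show ?thesis using t1a by simp
    qed
    have t2: "- e * ip I z y \<le> gam / 4 * Z + e^2 / gam * Y"
      using amgm_ip[of "gam/2" "-e" I z y] gpos unfolding Z_def Y_def by simp
    have e2: "e^2 \<le> K^2 * th^2"
    proof -
      have "\<bar>e\<bar>^2 \<le> (K * th)^2" by (rule power_mono[OF eb]) simp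
      then show ?thesis by (simp add: power_mult_distrib)
    qed
    have "gam * Z \<le> gam / 2 * Z + (th^2 * B2 + e^2) / gam * Y"
      using ER g t1 t2 by (simp add: add_divide_distrib algebra_simps)
    hence "gam / 2 * Z \<le> (th^2 * B2 + e^2) / gam * Y" by linarith
    also have "\<dots> \<le> (th^2 * B2 + K^2 * th^2) / gam * Y"
      using e2 Yn gpos by (intro mult_right_mono divide_right_mono) auto
    finally have "Z \<le> 2 * (th^2 * B2 + K^2 * th^2) / gam^2 * Y"
      using gpos by (simp add: field_simps power2_eq_square)
    also have "2 * (th^2 * B2 + K^2 * th^2) / gam^2 = th^2 * kap" unfolding kap_def by (simp add: field_simps)
    finally have Zb: "Z \<le> th^2 * kap * Y" .
    have Yb: "Y \<le> 2 * Z + 2 * (th * a)^2 * Wn" unfolding Y_def Z_def Wn_def ye by (rule ip_ab)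
    have a2: "a^2 \<le> 1 / nn" using WW Yn nn_pos by (simp add: field_simps)
    have "(th * a)^2 * Wn = th^2 * (a^2 * Wn)" by (simp add: power_mult_distrib)
    also have "\<dots> \<le> th^2 * ((1/nn) * Wn)" using mult_right_mono[OF a2 Wnn] by (intro mult_left_mono) auto
    finally have "(th * a)^2 * Wn \<le> th^2 * Wn / nn" by simp
    hence Yb2: "Y \<le> 2 * Z + 2 * th^2 * Wn / nn" using Yb by simp
    have "Z \<le> th^2 * kap * (2 * Z + 2 * th^2 * Wn / nn)"
      using Zb Yb2 th kapn by (meson mult_left_mono order_trans zero_le_mult_iff zero_le_power2)
    also have "\<dots> = 2 * (th^2 * kap) * Z + 2 * (th^2 * kap) * (th^2 * Wn / nn)" by (simp add: algebra_simps)
    also have "\<dots> \<le> 2 * (1/4) * Z + 2 * (th^2 * kap) * (th^2 * Wn / nn)"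
      using thk Zn kapn by (intro add_mono mult_left_mono mult_right_mono) auto
    finally have h: "Z \<le> 2 * (1/4) * Z + 2 * (th^2 * kap) * (th^2 * Wn / nn)" .
    have "2 * (2 * (th^2 * kap) * (th^2 * Wn / nn)) = 4 * th^4 * kap * Wn / nn"
      by (simp add: algebra_simps power2_eq_square power4_eq_xxxx)
    hence "Z \<le> 4 * th^4 * kap * Wn / nn" using h by linarith
    hence Zb2: "Z \<le> th^4 * C3" unfolding C3_def by (simp add: mult_ac)
    have th2: "th^4 \<le> th^2" using th th1 by (simp add: power_decreasing)
    have Yb3: "Y \<le> th^2 * C4"
    proof -
      have "Y \<le> 2 * (th^4 * C3) + 2 * th^2 * Wn / nn" using Yb2 Zb2 by linarith
      also have "\<dots> \<le> 2 * (th^2 * C3) + 2 * th^2 * Wn / nn" using th2 C3n by (simp add: mult_right_mono)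
      also have "\<dots> = th^2 * C4" unfolding C4_def by (simp add: algebra_simps)
      finally show ?thesis .
    qed
    have as: "\<bar>a - s\<bar> \<le> Y / (nn * s)"
    proof -
      have "(a - s) * (a + s) = a^2 - s^2" by (simp add: algebra_simps power2_eq_square)
      also have "\<dots> = - Y / nn" using WW s2 nn_pos by (simp add: field_simps)
      finally have "\<bar>a - s\<bar> * (a + s) = Y / nn" using Yn nn_pos apos spos
        by (metis abs_minus abs_mult abs_of_nonneg abs_of_pos add_pos_pos divide_nonneg_pos minus_divide_left)
      moreover have "\<bar>a - s\<bar> * s \<le> \<bar>a - s\<bar> * (a + s)" using apos by (simp add: mult_left_mono)
      ultimately have "\<bar>a - s\<bar> * s \<le> Y / nn" by simp
      then show ?thesis using spos nn_pos by (simp add: field_simps)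
    qed
    have zi: "\<bar>z i\<bar> \<le> sqrt C3 * th^2"
    proof -
      have "(z i)^2 \<le> Z" unfolding Z_def by (rule comp_le_ip[OF fin i])
      also have "\<dots> \<le> (sqrt C3 * th^2)^2" using Zb2 C3n by (simp add: power_mult_distrib power2_eq_square power4_eq_xxxx mult_ac)
      finally have "\<bar>z i\<bar> \<le> \<bar>sqrt C3 * th^2\<bar>" using abs_le_square_iff by blast
      thus ?thesis using C3n by simp
    qed
    have wi: "\<bar>w i\<bar> \<le> sqrt Wn" unfolding Wn_def by (rule sq_abs_le[OF comp_le_ip[OF fin i]])
    have eq: "W i - (1 / sqrt nn) * (1 + th * w i) = (a - s) * (1 + th * w i) + z i"
    proof -
      have "W i = a + z i + th * a * w i" unfolding z_def y_def by simp
      then show ?thesis unfolding s_def[symmetric] by (simp add: algebra_simps)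
    qed
    have t1: "\<bar>(a - s) * (1 + th * w i) + z i\<bar> \<le> \<bar>a - s\<bar> * \<bar>1 + th * w i\<bar> + \<bar>z i\<bar>"
      by (metis abs_mult abs_triangle_ineq)
    have w1: "\<bar>1 + th * w i\<bar> \<le> 1 + sqrt Wn"
    proof -
      have "th * \<bar>w i\<bar> \<le> 1 * sqrt Wn" by (rule mult_mono[OF th1 wi]) auto
      hence "\<bar>th * w i\<bar> \<le> 1 * sqrt Wn" using th by (simp add: abs_mult)
      then show ?thesis by linarith
    qed
    have t2: "\<bar>a - s\<bar> * \<bar>1 + th * w i\<bar> \<le> Y / (nn * s) * (1 + sqrt Wn)"
      using as w1 by (intro mult_mono) auto
    have "Y / (nn * s) \<le> th^2 * C4 / (nn * s)" using Yb3 nn_pos spos by (simp add: divide_right_mono)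
    hence t3: "Y / (nn * s) * (1 + sqrt Wn) \<le> th^2 * C4 / (nn * s) * (1 + sqrt Wn)"
      using Wnn by (intro mult_right_mono) auto
    have fin1: "\<bar>(a - s) * (1 + th * w i) + z i\<bar> \<le> th^2 * C4 / (nn * s) * (1 + sqrt Wn) + sqrt C3 * th^2"
      using t1 t2 t3 zi by linarith
    show ?thesis unfolding eq C_def using fin1 by (simp add: algebra_simps)
  qed
  show ?thesis using th0p main by blast
qed

end

end


lemma mem_triN: "(j,l) \<in> triN N \<longleftrightarrow> j \<le> l \<and> l < N" unfolding triN_def by simp

lemma triN_sub: "triN N \<subseteq> {..<N} \<times> {..<N}" unfolding triN_def by auto

lemma finite_triN: "finite (triN N)" using finite_subset[OF triN_sub] by simp

lemma triN_ne: "N \<ge> 1 \<Longrightarrow> triN N \<noteq> {}" using mem_triN[of 0 0 N] by auto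

lemma sget_sym: "sget S j l = sget S l j" unfolding sget_def by auto

lemma sget_eq: "(\<And>q. q \<in> triN N \<Longrightarrow> S q = S' q) \<Longrightarrow> a < N \<Longrightarrow> b < N \<Longrightarrow> sget S a b = sget S' a b"
  unfolding sget_def by (auto simp: mem_triN)

lemma sget_T: "(j,l) \<in> triN N \<Longrightarrow> sget S j l = S (j,l)" unfolding sget_def by (auto simp: mem_triN)

definition thf :: "nat \<Rightarrow> (nat \<Rightarrow> nat \<Rightarrow> real) \<Rightarrow> (nat \<Rightarrow> nat \<Rightarrow> real) \<Rightarrow> nat \<Rightarrow> nat \<Rightarrow> real" where
  "thf N G s j l = 2 * G j l * (if j \<noteq> l then 1 else 0) * (s j j + s l l - 2 * s j l)
    + (\<Sum>n\<in>{..<N} - {j,l}. G l n * (s j n - s j l) + G j n * (s n l - s j l))"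

lemma Theta_thf: "ThetaOp N G S (j,l) = thf N G (sget S) j l"
  unfolding ThetaOp_def thf_def by simp

lemma Theta_local:
  assumes p: "p \<in> triN N" and eq: "\<And>q. q \<in> triN N \<Longrightarrow> S q = S' q"
  shows "ThetaOp N G S p = ThetaOp N G S' p"
proof -
  obtain j l where pj: "p = (j,l)" by (cases p)
  have jl: "j < N" "l < N" using p pj mem_triN by auto
  have se: "\<And>a b. a < N \<Longrightarrow> b < N \<Longrightarrow> sget S a b = sget S' a b" using sget_eq[of N S S'] eq by blast
  show ?thesis unfolding pj Theta_thf thf_def using jl
    by (simp add: se)
qed

lemma sget_lin: "sget (\<lambda>r. c * S r + S' r) a b = c * sget S a b + sget S' a b"
  unfolding sget_def by simp

lemma Theta_lin: "ThetaOp N G (\<lambda>r. c * S r + S' r) p = c * ThetaOp N G S p + ThetaOp N G S' p"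
proof -
  obtain j l where pj: "p = (j,l)" by (cases p)
  define D where "D = {..<N} - {j,l}"
  define f where "f s n = G l n * (s j n - s j l) + G j n * (s n l - s j l)" for s :: "nat \<Rightarrow> nat \<Rightarrow> real" and n
  define h where "h s = 2 * G j l * (if j \<noteq> l then 1 else 0) * (s j j + s l l - 2 * s j l)" for s :: "nat \<Rightarrow> nat \<Rightarrow> real"
  have th: "thf N G s j l = h s + sum (f s) D" for s unfolding thf_def h_def f_def D_def by simp
  define s1 where "s1 = sget S"
  define s2 where "s2 = sget S'"
  have lin: "sget (\<lambda>r. c * S r + S' r) = (\<lambda>a b. c * s1 a b + s2 a b)"
    unfolding s1_def s2_def by (intro ext) (rule sget_lin)
  have "f (\<lambda>a b. c * s1 a b + s2 a b) n = c * f s1 n + f s2 n" for n unfolding f_def by (simp add: algebra_simps)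
  hence "sum (f (\<lambda>a b. c * s1 a b + s2 a b)) D = c * sum (f s1) D + sum (f s2) D"
    by (simp add: sum.distrib sum_distrib_left)
  moreover have "h (\<lambda>a b. c * s1 a b + s2 a b) = c * h s1 + h s2" unfolding h_def by (simp add: algebra_simps)
  ultimately show ?thesis unfolding pj Theta_thf lin th s1_def[symmetric] s2_def[symmetric] by (simp add: algebra_simps)
qed

lemma Theta_zero: "ThetaOp N G (\<lambda>r. 0) p = 0"
proof -
  obtain j l where pj: "p = (j,l)" by (cases p)
  show ?thesis unfolding pj Theta_thf thf_def sget_def by simp
qed

lemma Theta_one: "ThetaOp N G (\<lambda>r. 1) p = 0"
proof -
  obtain j l where pj: "p = (j,l)" by (cases p)
  show ?thesis unfolding pj Theta_thf thf_def sget_def by simp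
qed

definition dl :: "nat \<times> nat \<Rightarrow> nat \<times> nat \<Rightarrow> real" where "dl q = (\<lambda>r. if r = q then 1 else 0)"

definition KT :: "nat \<Rightarrow> (nat \<Rightarrow> nat \<Rightarrow> real) \<Rightarrow> nat \<times> nat \<Rightarrow> nat \<times> nat \<Rightarrow> real" where
  "KT N G p q = ThetaOp N G (dl q) p"

lemma Theta_sum:
  assumes "finite Q"
  shows "ThetaOp N G (\<lambda>r. \<Sum>q\<in>Q. S q * dl q r) p = (\<Sum>q\<in>Q. S q * ThetaOp N G (dl q) p)"
  using assms
proof (induction Q rule: finite_induct)
  case empty
  then show ?case using Theta_zero by simp
next
  case (insert x F)
  have "(\<lambda>r. \<Sum>q\<in>insert x F. S q * dl q r) = (\<lambda>r. S x * dl x r + (\<Sum>q\<in>F. S q * dl q r))"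
    using insert by simp
  then show ?case using insert Theta_lin by simp
qed

lemma Theta_mop:
  assumes p: "p \<in> triN N"
  shows "ThetaOp N G S p = mop (triN N) (KT N G) S p"
proof -
  have "ThetaOp N G S p = ThetaOp N G (\<lambda>r. \<Sum>q\<in>triN N. S q * dl q r) p"
  proof (rule Theta_local[OF p])
    fix q assume q: "q \<in> triN N"
    have "(\<Sum>q'\<in>triN N. S q' * dl q' q) = (\<Sum>q'\<in>triN N. if q' = q then S q' else 0)"
      unfolding dl_def by (intro sum.cong) auto
    also have "\<dots> = S q" using q finite_triN by simp
    finally show "S q = (\<Sum>q'\<in>triN N. S q' * dl q' q)" by simp
  qed
  also have "\<dots> = (\<Sum>q\<in>triN N. S q * ThetaOp N G (dl q) p)" by (rule Theta_sum[OF finite_triN])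
  also have "\<dots> = mop (triN N) (KT N G) S p" unfolding mop_def KT_def by (simp add: mult.commute)
  finally show ?thesis .
qed

lemma gen_rowsum:
  assumes "gen_matrix N G" "l < N"
  shows "(\<Sum>n<N. G l n) = 0"
proof -
  have "(\<Sum>n<N. G l n) = G l l + (\<Sum>n\<in>{..<N} - {l}. G l n)"
    using assms(2) by (simp add: sum.remove)
  then show ?thesis using assms unfolding gen_matrix_def by simp
qed

definition thg :: "nat \<Rightarrow> (nat \<Rightarrow> nat \<Rightarrow> real) \<Rightarrow> (nat \<Rightarrow> nat \<Rightarrow> real) \<Rightarrow> nat \<Rightarrow> nat \<Rightarrow> real" where
  "thg N G s j l = (\<Sum>n<N. G l n * s j n) + (\<Sum>n<N. G j n * s n l) + G j l * (s j j + s l l - 2 * s j l)"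

lemma thf_thg:
  assumes G: "gen_matrix N G" and jl: "j < N" "l < N"
  shows "thf N G s j l = thg N G s j l"
proof -
  define A where "A n = G l n * (s j n - s j l)" for n
  define B where "B n = G j n * (s n l - s j l)" for n
  have sA: "(\<Sum>n<N. A n) = (\<Sum>n<N. G l n * s j n)"
  proof -
    have "(\<Sum>n<N. A n) = (\<Sum>n<N. G l n * s j n) - s j l * (\<Sum>n<N. G l n)"
      unfolding A_def by (simp add: algebra_simps sum_subtractf sum_distrib_left)
    then show ?thesis using gen_rowsum[OF G jl(2)] by simp
  qed
  have sB: "(\<Sum>n<N. B n) = (\<Sum>n<N. G j n * s n l)"
  proof -
    have "(\<Sum>n<N. B n) = (\<Sum>n<N. G j n * s n l) - s j l * (\<Sum>n<N. G j n)"
      unfolding B_def by (simp add: algebra_simps sum_subtractf sum_distrib_left)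
    then show ?thesis using gen_rowsum[OF G jl(1)] by simp
  qed
  have Gs: "G l j = G j l" using G jl unfolding gen_matrix_def by auto
  show ?thesis
  proof (cases "j = l")
    case True
    have "(\<Sum>n\<in>{..<N} - {j,l}. A n + B n) = (\<Sum>n<N. A n + B n) - (A j + B j)"
      using True jl by (simp add: sum_diff1)
    also have "A j + B j = 0" unfolding A_def B_def using True by simp
    finally have "(\<Sum>n\<in>{..<N} - {j,l}. A n + B n) = (\<Sum>n<N. G l n * s j n) + (\<Sum>n<N. G j n * s n l)"
      using sA sB by (simp add: sum.distrib)
    then show ?thesis unfolding thf_def thg_def A_def B_def using True by simp
  next
    case False
    have "(\<Sum>n\<in>{..<N} - {j,l}. A n + B n) = (\<Sum>n<N. A n + B n) - (A j + B j) - (A l + B l)"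
    proof -
      have "{..<N} - {j,l} = ({..<N} - {j}) - {l}" by auto
      moreover have "l \<in> {..<N} - {j}" using False jl by auto
      ultimately show ?thesis using jl by (simp add: sum_diff1)
    qed
    also have "A j + B j = G l j * (s j j - s j l)" unfolding A_def B_def by simp
    also have "A l + B l = G j l * (s l l - s j l)" unfolding A_def B_def by simp
    finally have e: "(\<Sum>n\<in>{..<N} - {j,l}. A n + B n) = (\<Sum>n<N. G l n * s j n) + (\<Sum>n<N. G j n * s n l)
        - G j l * (s j j - s j l) - G j l * (s l l - s j l)"
      using sA sB Gs by (simp add: sum.distrib)
    show ?thesis unfolding thf_def thg_def using False e unfolding A_def B_def
      by (simp add: algebra_simps)
  qed
qed


lemma triN_Suc: "triN (Suc N) = triN N \<union> (\<lambda>j. (j, N)) ` {..N}"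
  unfolding triN_def by (auto simp: less_Suc_eq)

lemma triN_sum:
  fixes h :: "nat \<Rightarrow> nat \<Rightarrow> real"
  assumes "\<And>j l. j < N \<Longrightarrow> l < N \<Longrightarrow> h j l = h l j"
  shows "2 * (\<Sum>p\<in>triN N. h (fst p) (snd p)) = (\<Sum>j<N. \<Sum>l<N. h j l) + (\<Sum>j<N. h j j)"
  using assms
proof (induction N)
  case 0
  then show ?case unfolding triN_def by simp
next
  case (Suc N)
  have IH: "2 * (\<Sum>p\<in>triN N. h (fst p) (snd p)) = (\<Sum>j<N. \<Sum>l<N. h j l) + (\<Sum>j<N. h j j)"
    using Suc.IH Suc.prems by simp
  have disj: "triN N \<inter> (\<lambda>j. (j, N)) ` {..N} = {}" unfolding triN_def by auto
  have "(\<Sum>p\<in>triN (Suc N). h (fst p) (snd p)) = (\<Sum>p\<in>triN N. h (fst p) (snd p)) + (\<Sum>p\<in>(\<lambda>j. (j, N)) ` {..N}. h (fst p) (snd p))"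
    unfolding triN_Suc using disj finite_triN by (intro sum.union_disjoint) auto
  also have "(\<Sum>p\<in>(\<lambda>j. (j, N)) ` {..N}. h (fst p) (snd p)) = (\<Sum>j\<le>N. h j N)"
    by (subst sum.reindex) (auto simp: inj_on_def)
  also have "(\<Sum>j\<le>N. h j N) = (\<Sum>j<N. h j N) + h N N" by (simp add: lessThan_Suc_atMost[symmetric])
  finally have L: "(\<Sum>p\<in>triN (Suc N). h (fst p) (snd p)) = (\<Sum>p\<in>triN N. h (fst p) (snd p)) + (\<Sum>j<N. h j N) + h N N" by simp
  have sy: "(\<Sum>l<N. h N l) = (\<Sum>j<N. h j N)" using Suc.prems by (intro sum.cong) auto
  have "(\<Sum>j<Suc N. \<Sum>l<Suc N. h j l) = (\<Sum>j<N. \<Sum>l<N. h j l) + (\<Sum>j<N. h j N) + (\<Sum>l<N. h N l) + h N N"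
    by (simp add: sum.distrib)
  then show ?case using L IH sy by simp
qed

context
  fixes N :: nat and G :: "nat \<Rightarrow> nat \<Rightarrow> real"
  assumes G: "gen_matrix N G"
begin

lemma Gsym: "j < N \<Longrightarrow> l < N \<Longrightarrow> G j l = G l j" using G unfolding gen_matrix_def by auto

definition "P1 s t = (\<Sum>j<N. \<Sum>l<N. \<Sum>n<N. s j l * G l n * t j n)"
definition "P2 s t = (\<Sum>j<N. \<Sum>l<N. \<Sum>n<N. s j l * G j n * t n l)"
definition "XX s t = (\<Sum>j<N. \<Sum>l<N. s j l * G j l * t j j)"
definition "YY s t = (\<Sum>j<N. \<Sum>l<N. s j l * G j l * t j l)"

definition "symf s \<longleftrightarrow> (\<forall>j<N. \<forall>l<N. s j l = s l j)"

lemma P1_sym: "P1 s t = P1 t s"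
proof -
  have "(\<Sum>l<N. \<Sum>n<N. s j l * G l n * t j n) = (\<Sum>l<N. \<Sum>n<N. t j l * G l n * s j n)" if "j < N" for j
  proof -
    have "(\<Sum>l<N. \<Sum>n<N. s j l * G l n * t j n) = (\<Sum>n<N. \<Sum>l<N. s j l * G l n * t j n)" by (rule sum.swap)
    also have "\<dots> = (\<Sum>l<N. \<Sum>n<N. t j l * G l n * s j n)"
    proof (intro sum.cong refl)
      fix x y assume "x \<in> {..<N}" "y \<in> {..<N}"
      then show "s j y * G y x * t j x = t j x * G x y * s j y" using Gsym[of y x] by (simp add: mult_ac)
    qed
    finally show ?thesis .
  qed
  then show ?thesis unfolding P1_def by (rule sum.cong[OF refl]) simp
qed

lemma sum3_swap13: "(\<Sum>j<N. \<Sum>l<N. \<Sum>n<N. f j l n) = (\<Sum>n<N. \<Sum>l<N. \<Sum>j<N. (f j l n :: real))"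
proof -
  have "(\<Sum>j<N. \<Sum>l<N. \<Sum>n<N. f j l n) = (\<Sum>j<N. \<Sum>n<N. \<Sum>l<N. f j l n)" by (rule sum.cong[OF refl], rule sum.swap)
  also have "\<dots> = (\<Sum>n<N. \<Sum>j<N. \<Sum>l<N. f j l n)" by (rule sum.swap)
  also have "\<dots> = (\<Sum>n<N. \<Sum>l<N. \<Sum>j<N. f j l n)" by (rule sum.cong[OF refl], rule sum.swap)
  finally show ?thesis .
qed

lemma P2_sym: "P2 s t = P2 t s"
proof -
  have "P2 s t = (\<Sum>n<N. \<Sum>l<N. \<Sum>j<N. s j l * G j n * t n l)" unfolding P2_def by (rule sum3_swap13)
  also have "\<dots> = P2 t s" unfolding P2_def
  proof (intro sum.cong refl)
    fix x y z assume "x \<in> {..<N}" "y \<in> {..<N}" "z \<in> {..<N}"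
    then show "s z y * G z x * t x y = t x y * G x z * s z y" using Gsym[of z x] by (simp add: mult_ac)
  qed
  finally show ?thesis .
qed

lemma YY_sym: "YY s t = YY t s" unfolding YY_def by (simp add: mult_ac)

lemma thg_sym: "symf t \<Longrightarrow> j < N \<Longrightarrow> l < N \<Longrightarrow> thg N G t j l = thg N G t l j"
proof -
  assume t: "symf t" and jl: "j < N" "l < N"
  have "(\<Sum>n<N. G l n * t j n) = (\<Sum>n<N. G l n * t n j)" using t unfolding symf_def by (intro sum.cong) (auto simp: jl)
  moreover have "(\<Sum>n<N. G j n * t n l) = (\<Sum>n<N. G j n * t l n)" using t unfolding symf_def by (intro sum.cong) (auto simp: jl)
  moreover have "t j l = t l j" "G j l = G l j" using t jl Gsym unfolding symf_def by auto
  ultimately show ?thesis unfolding thg_def by simp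
qed

definition "Phi s t = (\<Sum>j<N. \<Sum>l<N. s j l * thg N G t j l) + (\<Sum>j<N. s j j * thg N G t j j)"

lemma Phi_expand:
  assumes s: "symf s" and t: "symf t"
  shows "Phi s t = P1 s t + P2 s t + 2 * XX s t + 2 * XX t s - 2 * YY s t"
proof -
  have a: "(\<Sum>j<N. \<Sum>l<N. s j l * thg N G t j l) = P1 s t + P2 s t + XX s t + (\<Sum>j<N. \<Sum>l<N. s j l * G j l * t l l) - 2 * YY s t"
    unfolding thg_def P1_def P2_def XX_def YY_def
    by (simp add: algebra_simps sum.distrib sum_distrib_left sum_subtractf)
  have b: "(\<Sum>j<N. \<Sum>l<N. s j l * G j l * t l l) = XX s t"
  proof -
    have "(\<Sum>j<N. \<Sum>l<N. s j l * G j l * t l l) = (\<Sum>l<N. \<Sum>j<N. s j l * G j l * t l l)" by (rule sum.swap)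
    also have "\<dots> = XX s t" unfolding XX_def
    proof (intro sum.cong refl)
      fix x y assume "x \<in> {..<N}" "y \<in> {..<N}"
      then show "s y x * G y x * t x x = s x y * G x y * t x x" using Gsym[of y x] s unfolding symf_def by simp
    qed
    finally show ?thesis .
  qed
  have c: "(\<Sum>j<N. s j j * thg N G t j j) = 2 * XX t s"
  proof -
    have "s j j * thg N G t j j = 2 * (\<Sum>l<N. t j l * G j l * s j j)" if "j < N" for j
    proof -
      have "(\<Sum>n<N. G j n * t n j) = (\<Sum>n<N. G j n * t j n)" using t that unfolding symf_def by (intro sum.cong) auto
      then show ?thesis unfolding thg_def by (simp add: sum_distrib_left sum_distrib_right mult_ac)
    qed
    then show ?thesis unfolding XX_def by (simp add: sum_distrib_left)
  qed
  show ?thesis unfolding Phi_def a b c by simp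
qed

lemma Phi_sym: "symf s \<Longrightarrow> symf t \<Longrightarrow> Phi s t = Phi t s"
proof -
  assume s: "symf s" and t: "symf t"
  show ?thesis using Phi_expand[OF s t] Phi_expand[OF t s] P1_sym[of s t] P2_sym[of s t] YY_sym[of s t] by linarith
qed

lemma symf_sget: "symf (sget S)" unfolding symf_def using sget_sym by auto

lemma ip_Theta: "2 * ip (triN N) S (ThetaOp N G S') = Phi (sget S) (sget S')"
proof -
  define h where "h j l = sget S j l * thg N G (sget S') j l" for j l
  have hs: "h j l = h l j" if "j < N" "l < N" for j l
    unfolding h_def using thg_sym[OF symf_sget that] sget_sym by metis
  have "ip (triN N) S (ThetaOp N G S') = (\<Sum>p\<in>triN N. h (fst p) (snd p))"
    unfolding ip_def
  proof (intro sum.cong refl)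
    fix p assume p: "p \<in> triN N"
    obtain j l where pj: "p = (j,l)" by (cases p)
    have jl: "j < N" "l < N" using p pj mem_triN by auto
    show "S p * ThetaOp N G S' p = h (fst p) (snd p)"
      unfolding pj h_def Theta_thf thf_thg[OF G jl] using sget_T p pj by simp
  qed
  then show ?thesis using triN_sum[of N h] hs unfolding Phi_def h_def by simp
qed

lemma Theta_symip: "ip (triN N) S (ThetaOp N G S') = ip (triN N) (ThetaOp N G S) S'"
proof -
  have "2 * ip (triN N) S (ThetaOp N G S') = 2 * ip (triN N) S' (ThetaOp N G S)"
    unfolding ip_Theta using Phi_sym symf_sget by metis
  then show ?thesis using ip_sym by simp
qed

lemma KT_sym: "symk (triN N) (KT N G)"
  unfolding symk_def
proof (intro ballI)
  fix p q assume p: "p \<in> triN N" and q: "q \<in> triN N"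
  have "KT N G p q = ip (triN N) (dl p) (ThetaOp N G (dl q))"
    unfolding KT_def dl_def using ip_delta[OF finite_triN p] by simp
  also have "\<dots> = ip (triN N) (ThetaOp N G (dl p)) (dl q)" by (rule Theta_symip)
  also have "\<dots> = KT N G q p"
    unfolding KT_def dl_def using ip_delta[OF finite_triN q] ip_sym by metis
  finally show "KT N G p q = KT N G q p" .
qed

end


lemma sortp_T: "j < N \<Longrightarrow> l < N \<Longrightarrow> (if j \<le> l then (j,l) else (l,j)) \<in> triN N"
  by (auto simp: mem_triN)

lemma sget_le: "(\<And>p. p \<in> triN N \<Longrightarrow> v p \<le> vm) \<Longrightarrow> j < N \<Longrightarrow> l < N \<Longrightarrow> sget v j l \<le> vm"
  unfolding sget_def by (auto simp: mem_triN)

context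
  fixes N :: nat and G :: "nat \<Rightarrow> nat \<Rightarrow> real"
  assumes G: "gen_matrix N G"
begin

lemma Gnn: "j < N \<Longrightarrow> l < N \<Longrightarrow> j \<noteq> l \<Longrightarrow> G j l \<ge> 0" using G unfolding gen_matrix_def by auto

lemma Gs: "j < N \<Longrightarrow> l < N \<Longrightarrow> G j l = G l j" using G unfolding gen_matrix_def by auto

lemma Theta_at: "j < N \<Longrightarrow> l < N \<Longrightarrow> ThetaOp N G S (if j \<le> l then (j,l) else (l,j)) = thf N G (sget S) j l"
proof -
  assume jl: "j < N" "l < N"
  have "thf N G (sget S) l j = thf N G (sget S) j l"
    using thf_thg[OF G] thg_sym[OF G symf_sget[OF G]] jl by metis
  then show ?thesis by (auto simp: Theta_thf)
qed

lemma sum_Theta: "ip (triN N) (\<lambda>_. 1) (ThetaOp N G S) = 0"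
proof -
  have "ip (triN N) (\<lambda>_. 1) (ThetaOp N G S) = ip (triN N) (ThetaOp N G (\<lambda>_. 1)) S" by (rule Theta_symip[OF G])
  also have "\<dots> = 0" unfolding ip_def using Theta_one by simp
  finally show ?thesis .
qed

lemma max_terms:
  assumes le: "\<And>a b. a < N \<Longrightarrow> b < N \<Longrightarrow> s a b \<le> vm" and jl: "j < N" "l < N" and sjl: "s j l = vm"
    and pos: "thf N G s j l \<ge> 0"
  shows "j \<noteq> l \<Longrightarrow> G j l > 0 \<Longrightarrow> s j j = vm"
    and "n < N \<Longrightarrow> n \<noteq> j \<Longrightarrow> n \<noteq> l \<Longrightarrow> G l n > 0 \<Longrightarrow> s j n = vm"
proof -
  define D where "D = {..<N} - {j,l}"
  define F where "F n = - (G l n * (s j n - s j l) + G j n * (s n l - s j l))" for n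
  define T1 where "T1 = 2 * G j l * (if j \<noteq> l then 1 else 0) * (s j j + s l l - 2 * s j l)"
  have sF: "sum F D = - (\<Sum>n\<in>D. G l n * (s j n - s j l) + G j n * (s n l - s j l))"
    unfolding F_def by (rule sum_negf)
  have th: "thf N G s j l = T1 - sum F D" unfolding sF unfolding thf_def T1_def D_def by simp
  have An: "G l n * (s j n - s j l) \<le> 0" if "n \<in> D" for n
  proof -
    have "G l n \<ge> 0" using that jl Gnn unfolding D_def by auto
    moreover have "s j n - s j l \<le> 0" using le[of j n] jl that sjl unfolding D_def by auto
    ultimately show ?thesis by (simp add: mult_nonneg_nonpos)
  qed
  have Bn: "G j n * (s n l - s j l) \<le> 0" if "n \<in> D" for n
  proof -
    have "G j n \<ge> 0" using that jl Gnn unfolding D_def by auto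
    moreover have "s n l - s j l \<le> 0" using le[of n l] jl that sjl unfolding D_def by auto
    ultimately show ?thesis by (simp add: mult_nonneg_nonpos)
  qed
  have Fn: "F n \<ge> 0" if "n \<in> D" for n using An[OF that] Bn[OF that] unfolding F_def by simp
  have T1n: "T1 \<le> 0"
  proof (cases "j = l")
    case True then show ?thesis unfolding T1_def by simp
  next
    case False
    have "G j l \<ge> 0" using Gnn jl False by simp
    moreover have "s j j + s l l - 2 * s j l \<le> 0" using le[of j j] le[of l l] jl sjl by simp
    ultimately show ?thesis unfolding T1_def using False by (simp add: mult_nonneg_nonpos)
  qed
  have sF: "sum F D \<ge> 0" using Fn by (simp add: sum_nonneg)
  have T10: "T1 = 0" and sF0: "sum F D = 0" using th pos T1n sF by linarith+
  have Fz: "F n = 0" if "n \<in> D" for n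
    using sF0 Fn that sum_nonneg_eq_0_iff[of D F] unfolding D_def by auto
  show "s j j = vm" if "j \<noteq> l" "G j l > 0"
  proof -
    have "s j j + s l l - 2 * s j l = 0" using T10 that unfolding T1_def by simp
    then show ?thesis using le[of j j] le[of l l] jl sjl by linarith
  qed
  show "s j n = vm" if "n < N" "n \<noteq> j" "n \<noteq> l" "G l n > 0"
  proof -
    have nD: "n \<in> D" using that unfolding D_def by auto
    have "G l n * (s j n - s j l) = 0" using Fz[OF nD] An[OF nD] Bn[OF nD] unfolding F_def by linarith
    then show ?thesis using that sjl by simp
  qed
qed

lemma max_principle:
  assumes irr: "irreducible_gen N G"
    and le: "\<And>p. p \<in> triN N \<Longrightarrow> v p \<le> vm" and p0: "p0 \<in> triN N" "v p0 = vm"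
    and H: "\<And>p. p \<in> triN N \<Longrightarrow> v p = vm \<Longrightarrow> ThetaOp N G v p \<ge> 0"
  shows "\<forall>p\<in>triN N. v p = vm"
proof -
  define s where "s = sget v"
  define P where "P j l \<longleftrightarrow> s j l = vm" for j l
  have sle: "\<And>a b. a < N \<Longrightarrow> b < N \<Longrightarrow> s a b \<le> vm" unfolding s_def using sget_le[of N v vm] le by blast
  have thpos: "thf N G s j l \<ge> 0" if "j < N" "l < N" "P j l" for j l
  proof -
    let ?p = "if j \<le> l then (j,l) else (l,j)"
    have "?p \<in> triN N" using sortp_T that by blast
    moreover have "v ?p = vm" using that unfolding P_def s_def sget_def by auto
    ultimately have "ThetaOp N G v ?p \<ge> 0" using H by blast
    then show ?thesis using Theta_at that unfolding s_def by simp
  qed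
  define E where "E a b \<longleftrightarrow> a < N \<and> b < N \<and> a \<noteq> b \<and> G a b > 0" for a b
  have estep: "P j n" if "j < N" "P j l" "E l n" for j l n
  proof -
    have l: "l < N" "n < N" "l \<noteq> n" "G l n > 0" using that(3) unfolding E_def by auto
    show ?thesis
    proof (cases "n = j")
      case True
      have "G j l > 0" using l Gs True by simp
      then show ?thesis using max_terms(1)[OF sle that(1) l(1) _ thpos[OF that(1) l(1) that(2)]] that(2) l True
        unfolding P_def by auto
    next
      case False
      then show ?thesis using max_terms(2)[OF sle that(1) l(1) _ thpos[OF that(1) l(1) that(2)]] that(2) l
        unfolding P_def by auto
    qed
  qed
  have reach: "P j l'" if "E\<^sup>*\<^sup>* l l'" "j < N" "P j l" for j l l'
    using that(1,3)
  proof (induction rule: rtranclp_induct)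
    case base then show ?case by simp
  next
    case (step y z) then show ?case using \<open>j < N\<close> estep by blast
  qed
  obtain j0 l0 where pj: "p0 = (j0,l0)" by (cases p0)
  have j0: "j0 < N" "l0 < N" using p0 pj mem_triN by auto
  have P0: "P j0 l0" using p0 pj sget_T unfolding P_def s_def by simp
  have irrE: "E\<^sup>*\<^sup>* a b" if "a < N" "b < N" for a b
    using irr that unfolding irreducible_gen_def E_def by blast
  have all: "P j l" if "j < N" "l < N" for j l
  proof -
    have "P j0 j" using reach[OF irrE[OF j0(2) that(1)] j0(1) P0] .
    hence "P j j0" unfolding P_def s_def using sget_sym by metis
    then show ?thesis using reach[OF irrE[OF j0(1) that(2)] that(1)] by simp
  qed
  show ?thesis
  proof
    fix p assume p: "p \<in> triN N"
    obtain j l where pj: "p = (j,l)" by (cases p)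
    have "j < N" "l < N" using p pj mem_triN by auto
    then show "v p = vm" using all sget_T p pj unfolding P_def s_def by metis
  qed
qed

lemma Theta_neg: "ThetaOp N G (\<lambda>r. - v r) p = - ThetaOp N G v p"
  using Theta_lin[of N G "-1" v "\<lambda>_. 0" p] Theta_zero by simp

lemma eig_const:
  assumes irr: "irreducible_gen N G" and ev: "\<And>p. p \<in> triN N \<Longrightarrow> ThetaOp N G v p = r * v p"
    and r: "r \<ge> 0" and p1: "p1 \<in> triN N" "v p1 > 0"
  shows "\<forall>p\<in>triN N. v p > 0"
proof -
  define vm where "vm = Max (v ` triN N)"
  have fin: "finite (v ` triN N)" using finite_triN by simp
  have le: "v p \<le> vm" if "p \<in> triN N" for p unfolding vm_def using fin that by simp
  have "vm \<in> v ` triN N" unfolding vm_def using fin p1 by (intro Max_in) auto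
  then obtain p0 where p0: "p0 \<in> triN N" "v p0 = vm" by auto
  have vmp: "vm > 0" using le[OF p1(1)] p1 by simp
  have "\<forall>p\<in>triN N. v p = vm"
  proof (rule max_principle[of v vm p0, OF irr le p0])
    fix p assume "p \<in> triN N" "v p = vm"
    then show "ThetaOp N G v p \<ge> 0" using ev r vmp by simp
  qed
  then show ?thesis using vmp by simp
qed

lemma Theta_gap:
  assumes irr: "irreducible_gen N G" and N1: "N \<ge> 1"
  shows "\<exists>gam>0. \<forall>z. ip (triN N) z (\<lambda>_. 1) = 0 \<longrightarrow> ip (triN N) z (mop (triN N) (KT N G) z) \<le> - gam * ip (triN N) z z"
proof -
  define T where "T = triN N"
  define nT where "nT = real (card T)"
  have finT: "finite T" and neT: "T \<noteq> {}" unfolding T_def using finite_triN triN_ne N1 by auto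
  have nTp: "nT > 0" unfolding nT_def using finT neT by (simp add: card_gt_0_iff)
  define KJ where "KJ p q = KT N G p q - 1 / nT" for p q
  have sKJ: "symk T KJ" using KT_sym[OF G] unfolding symk_def KJ_def T_def by auto
  define R where "R = Max {e. eigv T KJ e}"
  have Re: "eigv T KJ R" and Rr: "\<forall>x. ip T x (mop T KJ x) \<le> R * ip T x x"
    using Max_eig[OF finT neT sKJ] unfolding R_def by auto
  have mKJ: "mop T KJ x p = ThetaOp N G x p - (\<Sum>q\<in>T. x q) / nT" if "p \<in> T" for x p
  proof -
    have "mop T KJ x p = mop T (KT N G) x p - (\<Sum>q\<in>T. x q / nT)"
      unfolding mop_def KJ_def by (simp add: left_diff_distrib sum_subtractf)
    also have "mop T (KT N G) x p = ThetaOp N G x p" using Theta_mop that unfolding T_def by simp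
    finally show ?thesis by (simp add: sum_divide_distrib)
  qed
  have Rneg: "R < 0"
  proof (rule ccontr)
    assume "\<not> R < 0"
    hence R0: "R \<ge> 0" by simp
    obtain v where v: "\<exists>p\<in>T. v p \<noteq> 0" "\<forall>p\<in>T. mop T KJ v p = R * v p" using Re unfolding eigv_def by auto
    define m where "m = (\<Sum>q\<in>T. v q) / nT"
    have ev1: "ThetaOp N G v p - m = R * v p" if "p \<in> T" for p using v(2) mKJ that unfolding m_def by simp
    have "(\<Sum>p\<in>T. ThetaOp N G v p - m) = (\<Sum>p\<in>T. R * v p)" using ev1 by simp
    moreover have "(\<Sum>p\<in>T. ThetaOp N G v p) = 0" using sum_Theta unfolding ip_def T_def by simp
    ultimately have "- (nT * m) = R * (nT * m)"
      unfolding m_def nT_def using nTp by (simp add: sum_subtractf sum_distrib_left[symmetric] nT_def)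
    hence "nT * m * (1 + R) = 0" by (simp add: algebra_simps)
    hence m0: "m = 0" using nTp R0 by simp
    have ev: "ThetaOp N G v p = R * v p" if "p \<in> T" for p using ev1[OF that] m0 by simp
    have evn: "ThetaOp N G (\<lambda>r. - v r) p = R * (- v p)" if "p \<in> T" for p using ev[OF that] Theta_neg by simp
    obtain p1 where p1: "p1 \<in> T" "v p1 \<noteq> 0" using v(1) by auto
    have "(\<forall>p\<in>T. v p > 0) \<or> (\<forall>p\<in>T. - v p > 0)"
    proof (cases "v p1 > 0")
      case True
      then show ?thesis using eig_const[OF irr ev R0] p1 unfolding T_def by auto
    next
      case False
      hence "- v p1 > 0" using p1 by simp
      then show ?thesis using eig_const[OF irr evn R0, of p1] p1 unfolding T_def by auto
    qed
    hence "(\<Sum>q\<in>T. v q) > 0 \<or> (\<Sum>q\<in>T. - v q) > 0" using finT neT by (auto intro: sum_pos)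
    hence "m \<noteq> 0" unfolding m_def using nTp by (auto simp: sum_negf)
    then show False using m0 by simp
  qed
  have "ip T z (mop T (KT N G) z) \<le> - (- R) * ip T z z" if "ip T z (\<lambda>_. 1) = 0" for z
  proof -
    have s0: "(\<Sum>q\<in>T. z q) = 0" using that unfolding ip_def by simp
    have "ip T z (mop T (KT N G) z) = ip T z (mop T KJ z)"
    proof (rule ip_cong)
      fix p assume p: "p \<in> T"
      have "ThetaOp N G z p = mop T (KT N G) z p" using Theta_mop p unfolding T_def by blast
      then show "mop T (KT N G) z p = mop T KJ z p" using mKJ[OF p, of z] s0 by simp
    qed simp
    then show ?thesis using Rr by simp
  qed
  then show ?thesis using Rneg unfolding T_def by (intro exI[of _ "-R"]) auto
qed

end


lemma ev_small: "(th0::real) > 0 \<Longrightarrow> eventually (\<lambda>th. 0 < th \<and> th \<le> th0) (at_right 0)"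
  using eventually_at_right_real[of 0 th0] by (rule eventually_mono) auto

lemma bigO_ev:
  fixes f :: "real \<Rightarrow> real"
  assumes "eventually (\<lambda>th. \<bar>f th\<bar> \<le> C * th^k) (at_right 0)"
  shows "f \<in> O[at_right 0](\<lambda>th. th^k)"
proof (rule bigoI[of _ C])
  show "eventually (\<lambda>x. norm (f x) \<le> C * norm (x^k)) (at_right 0)"
    using eventually_conj[OF assms eventually_at_right_less[of 0]]
    by (rule eventually_mono) (simp add: abs_of_pos)
qed

lemma bigO_bound:
  fixes f :: "real \<Rightarrow> real"
  assumes "th0 > 0" "\<And>th. 0 < th \<Longrightarrow> th \<le> th0 \<Longrightarrow> \<bar>f th\<bar> \<le> C * th^k"
  shows "f \<in> O[at_right 0](\<lambda>th. th^k)"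
  by (rule bigO_ev[of f C k], rule eventually_mono[OF ev_small[OF assms(1)]]) (use assms(2) in auto)

lemma card_triN: "real (card (triN N)) = real N * (real N + 1) / 2"
proof -
  have "2 * (\<Sum>p\<in>triN N. (\<lambda>j l. (1::real)) (fst p) (snd p)) = (\<Sum>j<N. \<Sum>l<N. (1::real)) + (\<Sum>j<N. (1::real))"
    by (rule triN_sum) auto
  then show ?thesis by (simp add: algebra_simps)
qed

lemma sumT_lin: "(\<Sum>p\<in>triN N. f (fst p) + f (snd p)) = (real N + 1) * (\<Sum>j<N. (f j :: real))"
proof -
  have "2 * (\<Sum>p\<in>triN N. (\<lambda>j l. f j + f l) (fst p) (snd p)) = (\<Sum>j<N. \<Sum>l<N. f j + f l) + (\<Sum>j<N. f j + f j)"
    by (rule triN_sum) auto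
  moreover have "(\<Sum>j<N. \<Sum>l<N. f j + f l) = 2 * real N * (\<Sum>j<N. f j)"
    by (simp add: sum.distrib sum_distrib_left[symmetric] sum_distrib_right[symmetric] mult_ac)
  moreover have "(\<Sum>j<N. f j + f j) = 2 * (\<Sum>j<N. f j)" by (simp only: sum.distrib mult_2)
  ultimately have "2 * (\<Sum>p\<in>triN N. f (fst p) + f (snd p)) = 2 * ((real N + 1) * (\<Sum>j<N. f j))"
    by (simp add: algebra_simps)
  then show ?thesis by simp
qed

lemma sumT_sq:
  assumes "(\<Sum>j<N. (f j :: real)) = 0"
  shows "(\<Sum>p\<in>triN N. (f (fst p) + f (snd p))^2) = (real N + 2) * (\<Sum>j<N. (f j)^2)"
proof -
  have "2 * (\<Sum>p\<in>triN N. (\<lambda>j l. (f j + f l)^2) (fst p) (snd p)) = (\<Sum>j<N. \<Sum>l<N. (f j + f l)^2) + (\<Sum>j<N. (f j + f j)^2)"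
    by (rule triN_sum) (auto simp: add.commute)
  moreover have "(\<Sum>j<N. \<Sum>l<N. (f j + f l)^2) = 2 * real N * (\<Sum>j<N. (f j)^2)"
  proof -
    have "(\<Sum>j<N. \<Sum>l<N. (f j + f l)^2) = (\<Sum>j<N. \<Sum>l<N. (f j)^2 + 2 * f j * f l + (f l)^2)"
      by (simp add: power2_eq_square algebra_simps)
    also have "\<dots> = (\<Sum>j<N. real N * (f j)^2 + 2 * f j * (\<Sum>l<N. f l) + (\<Sum>l<N. (f l)^2))"
      by (simp add: sum.distrib sum_distrib_left)
    also have "\<dots> = 2 * real N * (\<Sum>j<N. (f j)^2)" using assms by (simp add: sum.distrib sum_distrib_left mult.assoc)
    finally show ?thesis .
  qed
  moreover have "(\<Sum>j<N. (f j + f j)^2) = 4 * (\<Sum>j<N. (f j)^2)" by (simp add: power2_eq_square sum_distrib_left algebra_simps)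
  ultimately show ?thesis by (simp add: algebra_simps)
qed

context
  fixes N :: nat and G :: "nat \<Rightarrow> nat \<Rightarrow> real" and g :: real
  assumes G: "gen_matrix N G" and Gc: "\<forall>j<N. \<forall>l<N. j \<noteq> l \<longrightarrow> G j l = g"
begin

lemma Gdiag: "j < N \<Longrightarrow> G j j = - (real N - 1) * g"
proof -
  assume j: "j < N"
  have "G j j = - (\<Sum>l\<in>{..<N} - {j}. G j l)" using G j unfolding gen_matrix_def by blast
  also have "(\<Sum>l\<in>{..<N} - {j}. G j l) = (\<Sum>l\<in>{..<N} - {j}. g)" using Gc j by (intro sum.cong) auto
  also have "\<dots> = (real N - 1) * g" using j by (simp add: of_nat_diff)
  finally show ?thesis by (simp add: algebra_simps)
qed

lemma Grow: "l < N \<Longrightarrow> (\<Sum>n<N. G l n * x n) = g * (\<Sum>n<N. x n) - g * real N * x l"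
proof -
  assume l: "l < N"
  have "(\<Sum>n<N. G l n * x n) = G l l * x l + (\<Sum>n\<in>{..<N} - {l}. G l n * x n)"
    using l by (simp add: sum.remove)
  also have "(\<Sum>n\<in>{..<N} - {l}. G l n * x n) = g * (\<Sum>n\<in>{..<N} - {l}. x n)"
    using Gc l by (simp add: sum_distrib_left)
  also have "(\<Sum>n\<in>{..<N} - {l}. x n) = (\<Sum>n<N. x n) - x l" using l by (simp add: sum_diff1)
  finally show ?thesis using Gdiag[OF l] by (simp add: algebra_simps)
qed

lemma Theta_pair:
  assumes d0: "(\<Sum>j<N. d j) = 0" and jl: "j < N" "l < N"
  shows "ThetaOp N G (\<lambda>p. c * (d (fst p) + d (snd p))) (j,l) = - c * g * real N * (d j + d l)"
proof -
  have sg: "sget (\<lambda>p. c * (d (fst p) + d (snd p))) = (\<lambda>a b. c * (d a + d b))"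
    unfolding sget_def by (intro ext) (auto simp: add.commute)
  have r0: "(\<Sum>n<N. G l n) = 0" "(\<Sum>n<N. G j n) = 0" using gen_rowsum[OF G] jl by auto
  have "thg N G (\<lambda>a b. c * (d a + d b)) j l
      = c * d j * (\<Sum>n<N. G l n) + c * (\<Sum>n<N. G l n * d n) + c * (\<Sum>n<N. G j n * d n) + c * d l * (\<Sum>n<N. G j n)"
    unfolding thg_def by (simp add: algebra_simps sum.distrib sum_distrib_left)
  also have "\<dots> = - c * g * real N * (d j + d l)" using r0 Grow[OF jl(1), of d] Grow[OF jl(2), of d] d0
    by (simp add: algebra_simps)
  finally show ?thesis unfolding Theta_thf thf_thg[OF G jl] sg .
qed

lemma Gamma_mop: "l < N \<Longrightarrow> (\<Sum>n<N. x n) = 0 \<Longrightarrow> mop {..<N} G x l = - g * real N * x l"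
  unfolding mop_def using Grow by simp

end


theorem mainTheorem9:
  fixes N :: nat and G :: "nat \<Rightarrow> nat \<Rightarrow> real" and L1 :: "nat \<Rightarrow> real"
  assumes "N \<ge> 2"
    and "gen_matrix N G"
    and "irreducible_gen N G"
    and "\<forall>j<N. L1 j \<ge> 0"
  defines "lam1 \<equiv> (\<Sum>j<N. L1 j) / real N"
  shows "(\<lambda>\<theta>. muF N G (\<lambda>j. \<theta> * L1 j) - 2 * \<theta> * lam1) \<in> O[at_right 0](\<lambda>\<theta>. \<theta>^2)
    \<and> (\<forall>g>0. (\<forall>j<N. \<forall>l<N. j \<noteq> l \<longrightarrow> G j l = g) \<longrightarrow>
        ((\<lambda>\<theta>. muF N G (\<lambda>j. \<theta> * L1 j)
              - (2 * \<theta> * lam1 - \<theta>^2 * (2 * (real N + 2) / ((real N)^2 * (real N + 1) * g))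
                   * (\<Sum>j<N. (L1 j - lam1)^2)))
           \<in> O[at_right 0](\<lambda>\<theta>. \<theta>^3))
      \<and> (\<forall>W :: real \<Rightarrow> nat \<times> nat \<Rightarrow> real.
            (\<forall>\<^sub>F \<theta> in at_right 0.
               op_eigvec N G (\<lambda>j. \<theta> * L1 j) (- muF N G (\<lambda>j. \<theta> * L1 j)) (W \<theta>)
               \<and> (\<Sum>p\<in>triN N. (W \<theta> p)^2) = 1
               \<and> (\<forall>p\<in>triN N. W \<theta> p > 0))
            \<longrightarrow> (\<forall>(j,l)\<in>triN N.
                  (\<lambda>\<theta>. W \<theta> (j,l)
                      - (sqrt 2 / sqrt (real N * (real N + 1))
                         + \<theta> * (- (sqrt 2 / sqrt (real N * (real N + 1))) / (g * real N)
                                   * (L1 j + L1 l - 2 * lam1))))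
                  \<in> O[at_right 0](\<lambda>\<theta>. \<theta>^2)))
      \<and> ((\<lambda>\<theta>. muF N G (\<lambda>j. \<theta> * L1 j) - 2 * lamF N G (\<lambda>j. \<theta> * L1 j)
              - (- 2 * \<theta>^2 / ((real N)^2 * (real N + 1) * g) * (\<Sum>j<N. (L1 j - lam1)^2)))
           \<in> O[at_right 0](\<lambda>\<theta>. \<theta>^3))
      \<and> ((\<exists>j<N. \<exists>l<N. L1 j \<noteq> L1 l) \<longrightarrow>
           (\<forall>\<^sub>F \<theta> in at_right 0. muF N G (\<lambda>j. \<theta> * L1 j) - 2 * lamF N G (\<lambda>j. \<theta> * L1 j) < 0)))"
proof -
  note N2 = assms(1) and G = assms(2) and irr = assms(3) and Lnn = assms(4)
  have N1: "N \<ge> 1" using N2 by simp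
  have Np: "real N > 0" using N1 by simp
  define T where "T = triN N"
  define bT where "bT p = L1 (fst p) + L1 (snd p)" for p
  obtain gT where gT: "gT > 0" "\<forall>z. ip T z (\<lambda>_. 1) = 0 \<longrightarrow> ip T z (mop T (KT N G) z) \<le> - gT * ip T z z"
    using Theta_gap[OF G irr N1] unfolding T_def by blast
  interpret PT: pert T "KT N G" bT gT
  proof
    show "finite T" "T \<noteq> {}" unfolding T_def using finite_triN triN_ne N1 by auto
    show "symk T (KT N G)" unfolding T_def by (rule KT_sym[OF G])
    show "mop T (KT N G) (\<lambda>_. 1) i = 0" if "i \<in> T" for i
      using Theta_mop[of i N G "\<lambda>_. 1"] Theta_one that unfolding T_def by simp
    show "gT > 0" by (rule gT(1))
    show "ip T z (mop T (KT N G) z) \<le> - gT * ip T z z" if "ip T z (\<lambda>_. 1) = 0" for z using gT(2) that by blast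
    show "bT i \<ge> 0" if "i \<in> T" for i using that Lnn unfolding bT_def T_def triN_def by auto
  qed
  have opeq: "ThetaOp N G S p - PsiOp (\<lambda>j. th * L1 j) S p = mop T (PT.Mth th) S p" if p: "p \<in> T" for S p th
  proof -
    obtain j l where pj: "p = (j,l)" by (cases p)
    have "PsiOp (\<lambda>j. th * L1 j) S p = th * (bT p * S p)"
      unfolding PsiOp_def pj bT_def using sget_T[of j l N S] p pj unfolding T_def by (simp add: algebra_simps)
    moreover have "ThetaOp N G S p = mop T (KT N G) S p" using Theta_mop p unfolding T_def by blast
    ultimately show ?thesis using PT.mop_Mth[OF p] by simp
  qed
  have muF_eq: "muF N G (\<lambda>j. th * L1 j) = - PT.Rt th" for th
  proof -
    have "{e. op_eigval N G (\<lambda>j. th * L1 j) e} = {e. eigv T (PT.Mth th) e}"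
      unfolding op_eigval_def op_eigvec_def eigv_def using opeq unfolding T_def by auto
    then show ?thesis unfolding muF_def PT.Rt_def by simp
  qed
  have nnT: "PT.nn = real N * (real N + 1) / 2" using PT.nn_def card_triN[of N] unfolding T_def by simp
  have sbT: "(\<Sum>p\<in>T. bT p) = (real N + 1) * (\<Sum>j<N. L1 j)" unfolding T_def bT_def by (rule sumT_lin)
  have betT: "PT.bet = 2 * lam1"
  proof -
    have N1p: "real N + 1 > 0" by simp
    have "real N * (real N + 1) / 2 = (real N + 1) * (real N / 2)" by simp
    hence "(real N + 1) * (\<Sum>j<N. L1 j) / (real N * (real N + 1) / 2) = (\<Sum>j<N. L1 j) / (real N / 2)"
      using N1p by (metis nonzero_mult_divide_mult_cancel_left order_less_irrefl)
    also have "\<dots> = 2 * ((\<Sum>j<N. L1 j) / real N)" by simp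
    finally show ?thesis unfolding PT.bet_def sbT nnT lam1_def .
  qed
  define C1 where "C1 = 2 * ip T PT.uu PT.uu / (gT * PT.nn)"
  define th1 where "th1 = gT / (2 * PT.bet + 1)"
  have C1n: "C1 \<ge> 0" unfolding C1_def using ip_nonneg[of T PT.uu] gT PT.nn_pos by simp
  have th1p: "th1 > 0" unfolding th1_def using gT PT.bet_nn by simp
  have first: "\<bar>PT.Rt th + th * PT.bet\<bar> \<le> C1 * th^2" if "0 < th" "th \<le> th1" for th
  proof -
    have "2 * th * PT.bet \<le> th * (2 * PT.bet + 1)" using that by (simp add: algebra_simps)
    also have "\<dots> \<le> gT" using that PT.bet_nn unfolding th1_def by (simp add: field_simps)
    finally have "PT.Rt th \<le> - th * PT.bet + th^2 * C1" using PT.Rt_upper1[of th] that unfolding C1_def by simp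
    moreover have "PT.Rt th \<ge> - th * PT.bet" by (rule PT.Rt_lower1)
    ultimately show ?thesis using C1n by (simp add: abs_le_iff algebra_simps)
  qed
  have claim1: "(\<lambda>\<theta>. muF N G (\<lambda>j. \<theta> * L1 j) - 2 * \<theta> * lam1) \<in> O[at_right 0](\<lambda>\<theta>. \<theta>^2)"
  proof (rule bigO_bound[OF th1p])
    fix th assume "0 < th" "th \<le> th1"
    then show "\<bar>muF N G (\<lambda>j. th * L1 j) - 2 * th * lam1\<bar> \<le> C1 * th^2"
      using first[of th] unfolding muF_eq betT by (simp add: abs_minus_commute algebra_simps)
  qed
  have claim2: "\<forall>g>0. (\<forall>j<N. \<forall>l<N. j \<noteq> l \<longrightarrow> G j l = g) \<longrightarrow>
        ((\<lambda>\<theta>. muF N G (\<lambda>j. \<theta> * L1 j)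
              - (2 * \<theta> * lam1 - \<theta>^2 * (2 * (real N + 2) / ((real N)^2 * (real N + 1) * g))
                   * (\<Sum>j<N. (L1 j - lam1)^2)))
           \<in> O[at_right 0](\<lambda>\<theta>. \<theta>^3))
      \<and> (\<forall>W :: real \<Rightarrow> nat \<times> nat \<Rightarrow> real.
            (\<forall>\<^sub>F \<theta> in at_right 0.
               op_eigvec N G (\<lambda>j. \<theta> * L1 j) (- muF N G (\<lambda>j. \<theta> * L1 j)) (W \<theta>)
               \<and> (\<Sum>p\<in>triN N. (W \<theta> p)^2) = 1
               \<and> (\<forall>p\<in>triN N. W \<theta> p > 0))
            \<longrightarrow> (\<forall>(j,l)\<in>triN N.
                  (\<lambda>\<theta>. W \<theta> (j,l)
                      - (sqrt 2 / sqrt (real N * (real N + 1))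
                         + \<theta> * (- (sqrt 2 / sqrt (real N * (real N + 1))) / (g * real N)
                                   * (L1 j + L1 l - 2 * lam1))))
                  \<in> O[at_right 0](\<lambda>\<theta>. \<theta>^2)))
      \<and> ((\<lambda>\<theta>. muF N G (\<lambda>j. \<theta> * L1 j) - 2 * lamF N G (\<lambda>j. \<theta> * L1 j)
              - (- 2 * \<theta>^2 / ((real N)^2 * (real N + 1) * g) * (\<Sum>j<N. (L1 j - lam1)^2)))
           \<in> O[at_right 0](\<lambda>\<theta>. \<theta>^3))
      \<and> ((\<exists>j<N. \<exists>l<N. L1 j \<noteq> L1 l) \<longrightarrow>
           (\<forall>\<^sub>F \<theta> in at_right 0. muF N G (\<lambda>j. \<theta> * L1 j) - 2 * lamF N G (\<lambda>j. \<theta> * L1 j) < 0))"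
  proof (intro allI impI)
    fix g :: real assume gp: "g > 0" and Gc: "\<forall>j<N. \<forall>l<N. j \<noteq> l \<longrightarrow> G j l = g"
    have gN: "g * real N > 0" using gp Np by simp
    define d where "d j = L1 j - lam1" for j
    define Sd where "Sd = (\<Sum>j<N. (L1 j - lam1)^2)"
    have Sd_d: "Sd = (\<Sum>j<N. (d j)^2)" unfolding Sd_def d_def ..
    have d0: "(\<Sum>j<N. d j) = 0"
      unfolding d_def lam1_def using Np by (simp add: sum_subtractf)
    define wT where "wT p = (- 1 / (g * real N)) * (d (fst p) + d (snd p))" for p
    have uuT: "PT.uu p = d (fst p) + d (snd p)" for p
      using PT.uu_def betT unfolding bT_def d_def by simp
    have wTperp: "ip T wT (\<lambda>_. 1) = 0"
    proof -
      have "ip T wT (\<lambda>_. 1) = (- 1 / (g * real N)) * (\<Sum>p\<in>T. d (fst p) + d (snd p))"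
        unfolding ip_def wT_def mult_1_right by (rule sum_distrib_left[symmetric])
      also have "(\<Sum>p\<in>T. d (fst p) + d (snd p)) = 0" unfolding T_def sumT_lin d0 by simp
      finally show ?thesis by simp
    qed
    have wTM: "mop T (KT N G) wT p = PT.uu p" if p: "p \<in> T" for p
    proof -
      obtain j l where pj: "p = (j,l)" by (cases p)
      have jl: "j < N" "l < N" using p pj mem_triN unfolding T_def by auto
      have "mop T (KT N G) wT p = ThetaOp N G wT p" using Theta_mop p unfolding T_def by metis
      also have "\<dots> = - (- 1 / (g * real N)) * g * real N * (d j + d l)"
        unfolding pj wT_def by (rule Theta_pair[OF G Gc d0 jl])
      also have "\<dots> = d j + d l" using gp Np by (simp add: field_simps)
      finally show ?thesis unfolding uuT pj by simp
    qed
    define coef where "coef = 2 * (real N + 2) / ((real N)^2 * (real N + 1) * g)"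
    have ccT: "PT.cc wT = coef * Sd"
    proof -
      have "ip T wT PT.uu = (- 1 / (g * real N)) * (\<Sum>p\<in>T. (d (fst p) + d (snd p))^2)"
        unfolding ip_def wT_def uuT by (simp add: sum_distrib_left power2_eq_square mult_ac)
      also have "(\<Sum>p\<in>T. (d (fst p) + d (snd p))^2) = (real N + 2) * Sd"
        unfolding T_def Sd_d by (rule sumT_sq[OF d0])
      finally have X: "ip T wT PT.uu = (- 1 / (g * real N)) * ((real N + 2) * Sd)" .
      have "PT.cc wT = - ip T wT PT.uu / PT.nn" by (rule PT.cc_def[OF wTperp wTM])
      also have "\<dots> = ((real N + 2) * Sd / (g * real N)) / (real N * (real N + 1) / 2)" unfolding X nnT by simp
      also have "\<dots> = coef * Sd"
      proof -
        have "g \<noteq> 0" "real N \<noteq> 0" "real N + 1 \<noteq> 0" using gp Np by auto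
        then show ?thesis unfolding coef_def by (simp add: field_simps power2_eq_square)
      qed
      finally show ?thesis .
    qed
    have smallT: "2 * th * PT.bet \<le> gT" if "0 < th" "th \<le> th1" for th
    proof -
      have "2 * th * PT.bet \<le> th * (2 * PT.bet + 1)" using that by (simp add: algebra_simps)
      also have "\<dots> \<le> gT" using that PT.bet_nn unfolding th1_def by (simp add: field_simps)
      finally show ?thesis .
    qed
    define C2T where "C2T = 2 * PT.bet * ip T wT wT / PT.nn"
    define KT3 where "KT3 = (PT.DD wT wT + PT.cc wT * ip T wT wT) / PT.nn"
    have C2Tn: "C2T \<ge> 0" unfolding C2T_def using PT.bet_nn ip_nonneg[of T wT] PT.nn_pos by simp
    have KT3n: "KT3 \<ge> 0" unfolding KT3_def
      using PT.DD_nn[of wT] PT.cc_nn[OF wTperp wTM] ip_nonneg[of T wT] PT.nn_pos by simp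
    define thT where "thT = min th1 1"
    have thTp: "thT > 0" unfolding thT_def using th1p by simp
    have secT: "\<bar>PT.Rt th - (- th * PT.bet + th^2 * PT.cc wT)\<bar> \<le> (C2T + KT3) * th^3"
      if th: "0 < th" "th \<le> thT" for th
    proof -
      have th': "th \<le> th1" "th \<le> 1" using th unfolding thT_def by auto
      have u: "PT.Rt th \<le> - th * PT.bet + th^2 * PT.cc wT + th^3 * C2T"
        using PT.Rt_upper2[OF wTperp wTM, of th] th smallT[OF th(1) th'(1)] unfolding C2T_def by simp
      have l: "PT.Rt th \<ge> - th * PT.bet + th^2 * PT.cc wT - th^3 * KT3"
        using PT.Rt_lower2[OF wTperp wTM, of th] th th' unfolding KT3_def by simp
      have "th^3 * C2T \<le> (C2T + KT3) * th^3" "th^3 * KT3 \<le> (C2T + KT3) * th^3"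
        using C2Tn KT3n th by (simp_all add: algebra_simps)
      then show ?thesis using u l by (simp add: abs_le_iff algebra_simps)
    qed
    interpret PG: pert "{..<N}" G L1 "g * real N"
    proof
      show "finite {..<N}" by simp
      show "{..<N} \<noteq> {}" using N1 lessThan_empty_iff by (metis not_one_le_zero)
      show "symk {..<N} G" using G unfolding symk_def gen_matrix_def by auto
      show "mop {..<N} G (\<lambda>_. 1) i = 0" if "i \<in> {..<N}" for i
        using gen_rowsum[OF G, of i] that unfolding mop_def by simp
      show "g * real N > 0" by (rule gN)
      show "ip {..<N} z (mop {..<N} G z) \<le> - (g * real N) * ip {..<N} z z" if "ip {..<N} z (\<lambda>_. 1) = 0" for z
      proof -
        have z0: "(\<Sum>n<N. z n) = 0" using that unfolding ip_def by simp
        have "ip {..<N} z (mop {..<N} G z) = ip {..<N} z (\<lambda>i. - (g * real N) * z i)"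
          by (rule ip_cong) (auto simp: Gamma_mop[OF G Gc _ z0])
        then show ?thesis unfolding ip_scale_right by simp
      qed
      show "L1 i \<ge> 0" if "i \<in> {..<N}" for i using Lnn that by simp
    qed
    have lamF_eq: "lamF N G (\<lambda>j. th * L1 j) = - PG.Rt th" for th
    proof -
      have "{e. mat_eigval N (\<lambda>j l. G j l - (if j = l then th * L1 j else 0)) e} = {e. eigv {..<N} (PG.Mth th) e}"
        unfolding mat_eigval_def eigv_def mop_def using PG.Mth_def by auto
      then show ?thesis unfolding lamF_def PG.Rt_def by simp
    qed
    have nnG: "PG.nn = real N" using PG.nn_def by simp
    have betG: "PG.bet = lam1" using PG.bet_def nnG unfolding lam1_def by simp
    have uuG: "PG.uu i = d i" for i using PG.uu_def betG unfolding d_def by simp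
    define wG where "wG i = (- 1 / (g * real N)) * d i" for i
    have wG0: "(\<Sum>n<N. wG n) = 0" unfolding wG_def sum_distrib_left[symmetric] d0 by simp
    have wGperp: "ip {..<N} wG (\<lambda>_. 1) = 0" using wG0 unfolding ip_def by simp
    have wGM: "mop {..<N} G wG i = PG.uu i" if "i \<in> {..<N}" for i
    proof -
      have "mop {..<N} G wG i = - g * real N * wG i" using Gamma_mop[OF G Gc _ wG0] that by simp
      also have "\<dots> = d i" unfolding wG_def using gp Np by (simp add: field_simps)
      finally show ?thesis unfolding uuG .
    qed
    have ccG: "PG.cc wG = Sd / (g * (real N)^2)"
    proof -
      have "ip {..<N} wG PG.uu = (- 1 / (g * real N)) * Sd"
        unfolding ip_def wG_def uuG Sd_d by (simp add: sum_distrib_left power2_eq_square mult_ac)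
      moreover have "PG.cc wG = - ip {..<N} wG PG.uu / PG.nn" by (rule PG.cc_def[OF wGperp wGM])
      ultimately show ?thesis unfolding nnG using gp Np by (simp add: field_simps power2_eq_square)
    qed
    define th1G where "th1G = (g * real N) / (2 * PG.bet + 1)"
    have th1Gp: "th1G > 0" unfolding th1G_def using gN PG.bet_nn by simp
    define C2G where "C2G = 2 * PG.bet * ip {..<N} wG wG / PG.nn"
    define KG3 where "KG3 = (PG.DD wG wG + PG.cc wG * ip {..<N} wG wG) / PG.nn"
    have C2Gn: "C2G \<ge> 0" unfolding C2G_def using PG.bet_nn ip_nonneg[of "{..<N}" wG] PG.nn_pos by simp
    have KG3n: "KG3 \<ge> 0" unfolding KG3_def
      using PG.DD_nn[of wG] PG.cc_nn[OF wGperp wGM] ip_nonneg[of "{..<N}" wG] PG.nn_pos by simp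
    define thG where "thG = min th1G 1"
    have thGp: "thG > 0" unfolding thG_def using th1Gp by simp
    have secG: "\<bar>PG.Rt th - (- th * PG.bet + th^2 * PG.cc wG)\<bar> \<le> (C2G + KG3) * th^3"
      if th: "0 < th" "th \<le> thG" for th
    proof -
      have th': "th \<le> th1G" "th \<le> 1" using th unfolding thG_def by auto
      have sm: "2 * th * PG.bet \<le> g * real N"
      proof -
        have "2 * th * PG.bet \<le> th * (2 * PG.bet + 1)" using th by (simp add: algebra_simps)
        also have "\<dots> \<le> g * real N" using th' PG.bet_nn unfolding th1G_def by (simp add: field_simps)
        finally show ?thesis .
      qed
      have u: "PG.Rt th \<le> - th * PG.bet + th^2 * PG.cc wG + th^3 * C2G"
        using PG.Rt_upper2[OF wGperp wGM, of th] th sm unfolding C2G_def by simp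
      have l: "PG.Rt th \<ge> - th * PG.bet + th^2 * PG.cc wG - th^3 * KG3"
        using PG.Rt_lower2[OF wGperp wGM, of th] th th' unfolding KG3_def by simp
      have "th^3 * C2G \<le> (C2G + KG3) * th^3" "th^3 * KG3 \<le> (C2G + KG3) * th^3"
        using C2Gn KG3n th by (simp_all add: algebra_simps)
      then show ?thesis using u l by (simp add: abs_le_iff algebra_simps)
    qed
    have zz: "X = 2 * th^2 / ((real N)^2 * (real N + 1) * g) * Sd \<Longrightarrow>
        - (th^2 * (coef * Sd)) + 2 * (th^2 * (Sd / (g * (real N)^2))) + X = 0" for X th
    proof -
      assume X: "X = 2 * th^2 / ((real N)^2 * (real N + 1) * g) * Sd"
      define Q where "Q = (real N)^2 * (real N + 1) * g"
      have Q0: "Q \<noteq> 0" unfolding Q_def using gp Np by simp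
      have e1: "coef = 2 * (real N + 2) / Q" unfolding coef_def Q_def ..
      have e2: "Sd / (g * (real N)^2) = (real N + 1) * Sd / Q"
      proof -
        have "Q = (real N + 1) * (g * (real N)^2)" unfolding Q_def by (simp add: mult_ac)
        moreover have "real N + 1 \<noteq> 0" by simp
        ultimately show ?thesis by simp
      qed
      have e3: "X = 2 * th^2 / Q * Sd" unfolding X Q_def ..
      show ?thesis unfolding e1 e2 e3 using Q0 by (simp add: field_simps)
    qed
    have c1: "(\<lambda>\<theta>. muF N G (\<lambda>j. \<theta> * L1 j)
              - (2 * \<theta> * lam1 - \<theta>^2 * (2 * (real N + 2) / ((real N)^2 * (real N + 1) * g))
                   * (\<Sum>j<N. (L1 j - lam1)^2)))
           \<in> O[at_right 0](\<lambda>\<theta>. \<theta>^3)"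
    proof (rule bigO_bound[OF thTp])
      fix th assume th: "0 < th" "th \<le> thT"
      have eq: "muF N G (\<lambda>j. th * L1 j) - (2 * th * lam1 - th^2 * (2 * (real N + 2) / ((real N)^2 * (real N + 1) * g)) * Sd)
          = - (PT.Rt th - (- th * PT.bet + th^2 * PT.cc wT))"
        unfolding muF_eq betT ccT coef_def by (simp add: algebra_simps)
      have "\<bar>muF N G (\<lambda>j. th * L1 j) - (2 * th * lam1 - th^2 * (2 * (real N + 2) / ((real N)^2 * (real N + 1) * g)) * Sd)\<bar>
          = \<bar>PT.Rt th - (- th * PT.bet + th^2 * PT.cc wT)\<bar>" unfolding eq by (rule abs_minus_cancel)
      then show "\<bar>muF N G (\<lambda>j. th * L1 j) - (2 * th * lam1 - th^2 * (2 * (real N + 2) / ((real N)^2 * (real N + 1) * g)) * (\<Sum>j<N. (L1 j - lam1)^2))\<bar> \<le> (C2T + KT3) * th^3"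
        using secT[OF th] unfolding Sd_def by linarith
    qed
    have c2: "\<forall>W :: real \<Rightarrow> nat \<times> nat \<Rightarrow> real.
            (\<forall>\<^sub>F \<theta> in at_right 0.
               op_eigvec N G (\<lambda>j. \<theta> * L1 j) (- muF N G (\<lambda>j. \<theta> * L1 j)) (W \<theta>)
               \<and> (\<Sum>p\<in>triN N. (W \<theta> p)^2) = 1
               \<and> (\<forall>p\<in>triN N. W \<theta> p > 0))
            \<longrightarrow> (\<forall>(j,l)\<in>triN N.
                  (\<lambda>\<theta>. W \<theta> (j,l)
                      - (sqrt 2 / sqrt (real N * (real N + 1))
                         + \<theta> * (- (sqrt 2 / sqrt (real N * (real N + 1))) / (g * real N)
                                   * (L1 j + L1 l - 2 * lam1))))
                  \<in> O[at_right 0](\<lambda>\<theta>. \<theta>^2))"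
    proof (intro allI impI)
      fix W :: "real \<Rightarrow> nat \<times> nat \<Rightarrow> real"
      assume evW: "\<forall>\<^sub>F \<theta> in at_right 0.
               op_eigvec N G (\<lambda>j. \<theta> * L1 j) (- muF N G (\<lambda>j. \<theta> * L1 j)) (W \<theta>)
               \<and> (\<Sum>p\<in>triN N. (W \<theta> p)^2) = 1
               \<and> (\<forall>p\<in>triN N. W \<theta> p > 0)"
      define KK where "KK = PT.bet + C1"
      have KKn: "KK \<ge> 0" unfolding KK_def using PT.bet_nn C1n by simp
      obtain C3 th3 where th3: "th3 > 0" and bnd: "\<forall>th e W'. 0 < th \<and> th \<le> th3 \<and> \<bar>e\<bar> \<le> KK * th
           \<and> (\<forall>i\<in>T. mop T (PT.Mth th) W' i = e * W' i) \<and> ip T W' W' = 1 \<and> ip T W' (\<lambda>_. 1) > 0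
           \<longrightarrow> (\<forall>i\<in>T. \<bar>W' i - (1 / sqrt PT.nn) * (1 + th * wT i)\<bar> \<le> C3 * th^2)"
        using PT.eigvec_bound[OF wTperp wTM KKn] by blast
      define th5 where "th5 = min (min th1 1) th3"
      have th5p: "th5 > 0" unfolding th5_def using th1p th3 by simp
      have Rsmall: "\<bar>PT.Rt th\<bar> \<le> KK * th" if "0 < th" "th \<le> th5" for th
      proof -
        have th': "th \<le> th1" "th \<le> 1" using that unfolding th5_def by auto
        have "\<bar>PT.Rt th + th * PT.bet\<bar> \<le> C1 * th^2" using first that th' by simp
        moreover have "C1 * th^2 \<le> C1 * th" using C1n that th' by (simp add: power2_eq_square mult_left_mono mult_left_le_one_le)
        moreover have "th * PT.bet \<ge> 0" using that PT.bet_nn by simp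
        ultimately show ?thesis unfolding KK_def by (simp add: abs_le_iff algebra_simps)
      qed
      define cN where "cN = sqrt 2 / sqrt (real N * (real N + 1))"
      have scN: "1 / sqrt PT.nn = cN" unfolding nnT cN_def by (simp add: real_sqrt_divide)
      show "\<forall>(j,l)\<in>triN N.
                  (\<lambda>\<theta>. W \<theta> (j,l)
                      - (sqrt 2 / sqrt (real N * (real N + 1))
                         + \<theta> * (- (sqrt 2 / sqrt (real N * (real N + 1))) / (g * real N)
                                   * (L1 j + L1 l - 2 * lam1))))
                  \<in> O[at_right 0](\<lambda>\<theta>. \<theta>^2)"
      proof (rule ballI)
        fix p assume pT: "p \<in> triN N"
        obtain j l where pj: "p = (j,l)" by (cases p)
        have p: "(j,l) \<in> T" using pT pj unfolding T_def by simp
        have "(\<lambda>\<theta>. W \<theta> (j,l)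
                      - (sqrt 2 / sqrt (real N * (real N + 1))
                         + \<theta> * (- (sqrt 2 / sqrt (real N * (real N + 1))) / (g * real N)
                                   * (L1 j + L1 l - 2 * lam1))))
                  \<in> O[at_right 0](\<lambda>\<theta>. \<theta>^2)"
        proof (rule bigO_ev[of _ C3])
          show "\<forall>\<^sub>F th in at_right 0. \<bar>W th (j,l)
                      - (sqrt 2 / sqrt (real N * (real N + 1))
                         + th * (- (sqrt 2 / sqrt (real N * (real N + 1))) / (g * real N)
                                   * (L1 j + L1 l - 2 * lam1)))\<bar> \<le> C3 * th^2"
          proof (rule eventually_mono[OF eventually_conj[OF evW ev_small[OF th5p]]])
            fix th assume H: "(op_eigvec N G (\<lambda>j. th * L1 j) (- muF N G (\<lambda>j. th * L1 j)) (W th)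
               \<and> (\<Sum>p\<in>triN N. (W th p)^2) = 1 \<and> (\<forall>p\<in>triN N. W th p > 0)) \<and> (0 < th \<and> th \<le> th5)"
            have th': "0 < th" "th \<le> th3" using H unfolding th5_def by auto
            have ev: "\<forall>i\<in>T. mop T (PT.Mth th) (W th) i = PT.Rt th * W th i"
            proof
              fix i assume i: "i \<in> T"
              have "ThetaOp N G (W th) i - PsiOp (\<lambda>j. th * L1 j) (W th) i = (- muF N G (\<lambda>j. th * L1 j)) * W th i"
                using H i unfolding op_eigvec_def T_def by blast
              then show "mop T (PT.Mth th) (W th) i = PT.Rt th * W th i" using opeq[OF i] muF_eq by simp
            qed
            have n1: "ip T (W th) (W th) = 1" using H unfolding ip_def T_def by (simp add: power2_eq_square)
            have ps: "ip T (W th) (\<lambda>_. 1) > 0"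
            proof -
              have "\<forall>i\<in>T. W th i > 0" using H unfolding T_def by blast
              moreover have "finite T" "T \<noteq> {}" using PT.fin PT.ne by auto
              ultimately show ?thesis unfolding ip_def by (simp add: sum_pos)
            qed
            have "\<bar>W th (j,l) - (1 / sqrt PT.nn) * (1 + th * wT (j,l))\<bar> \<le> C3 * th^2"
              using bnd th' Rsmall[of th] H ev n1 ps p by blast
            moreover have "(1 / sqrt PT.nn) * (1 + th * wT (j,l)) = sqrt 2 / sqrt (real N * (real N + 1))
                         + th * (- (sqrt 2 / sqrt (real N * (real N + 1))) / (g * real N)
                                   * (L1 j + L1 l - 2 * lam1))"
              unfolding scN cN_def[symmetric] wT_def d_def by (simp add: algebra_simps)
            ultimately show "\<bar>W th (j,l)
                      - (sqrt 2 / sqrt (real N * (real N + 1))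
                         + th * (- (sqrt 2 / sqrt (real N * (real N + 1))) / (g * real N)
                                   * (L1 j + L1 l - 2 * lam1)))\<bar> \<le> C3 * th^2" by simp
          qed
        qed
        then show "case p of (j,l) \<Rightarrow> (\<lambda>\<theta>. W \<theta> (j,l)
                      - (sqrt 2 / sqrt (real N * (real N + 1))
                         + \<theta> * (- (sqrt 2 / sqrt (real N * (real N + 1))) / (g * real N)
                                   * (L1 j + L1 l - 2 * lam1))))
                  \<in> O[at_right 0](\<lambda>\<theta>. \<theta>^2)" unfolding pj by simp
      qed
    qed
    have c3: "(\<lambda>\<theta>. muF N G (\<lambda>j. \<theta> * L1 j) - 2 * lamF N G (\<lambda>j. \<theta> * L1 j)
              - (- 2 * \<theta>^2 / ((real N)^2 * (real N + 1) * g) * (\<Sum>j<N. (L1 j - lam1)^2)))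
           \<in> O[at_right 0](\<lambda>\<theta>. \<theta>^3)"
    proof (rule bigO_bound[of "min thT thG"])
      show "min thT thG > 0" using thTp thGp by simp
      fix th assume th: "0 < th" "th \<le> min thT thG"
      have eq: "muF N G (\<lambda>j. th * L1 j) - 2 * lamF N G (\<lambda>j. th * L1 j) - (- 2 * th^2 / ((real N)^2 * (real N + 1) * g) * Sd)
          = - (PT.Rt th - (- th * PT.bet + th^2 * PT.cc wT)) + 2 * (PG.Rt th - (- th * PG.bet + th^2 * PG.cc wG))"
      proof -
        have z: "- (th^2 * (coef * Sd)) + 2 * (th^2 * (Sd / (g * (real N)^2))) + 2 * th^2 / ((real N)^2 * (real N + 1) * g) * Sd = 0"
          using zz[of "2 * th^2 / ((real N)^2 * (real N + 1) * g) * Sd"] by simp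
        show ?thesis unfolding muF_eq lamF_eq betT betG ccT ccG using z by (simp add: algebra_simps)
      qed
      have "\<bar>- (PT.Rt th - (- th * PT.bet + th^2 * PT.cc wT)) + 2 * (PG.Rt th - (- th * PG.bet + th^2 * PG.cc wG))\<bar>
          \<le> (C2T + KT3) * th^3 + 2 * ((C2G + KG3) * th^3)"
        using secT[of th] secG[of th] th by (simp add: abs_le_iff)
      then show "\<bar>muF N G (\<lambda>j. th * L1 j) - 2 * lamF N G (\<lambda>j. th * L1 j) - (- 2 * th^2 / ((real N)^2 * (real N + 1) * g) * (\<Sum>j<N. (L1 j - lam1)^2))\<bar>
          \<le> ((C2T + KT3) + 2 * (C2G + KG3)) * th^3"
        using eq unfolding Sd_def by (simp add: algebra_simps)
    qed
    have c4: "(\<exists>j<N. \<exists>l<N. L1 j \<noteq> L1 l) \<longrightarrow>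
           (\<forall>\<^sub>F \<theta> in at_right 0. muF N G (\<lambda>j. \<theta> * L1 j) - 2 * lamF N G (\<lambda>j. \<theta> * L1 j) < 0)"
    proof
      assume "\<exists>j<N. \<exists>l<N. L1 j \<noteq> L1 l"
      then obtain j l where jl: "j < N" "l < N" "L1 j \<noteq> L1 l" by blast
      have "d j \<noteq> 0 \<or> d l \<noteq> 0" using jl unfolding d_def by auto
      then obtain i where i: "i < N" "d i \<noteq> 0" using jl by blast
      have "(d i)^2 \<le> Sd" unfolding Sd_d using member_le_sum[of i "{..<N}" "\<lambda>i. (d i)^2"] i by simp
      moreover have "(d i)^2 > 0" using i by simp
      ultimately have Sdp: "Sd > 0" by linarith
      define K where "K = 2 * Sd / ((real N)^2 * (real N + 1) * g)"
      have Kp: "K > 0" unfolding K_def using Sdp gp Np by simp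
      define C where "C = (C2T + KT3) + 2 * (C2G + KG3)"
      have Cn: "C \<ge> 0" unfolding C_def using C2Tn KT3n C2Gn KG3n by simp
      define th4 where "th4 = min (min thT thG) (K / (C + 1))"
      have th4p: "th4 > 0" unfolding th4_def using thTp thGp Kp Cn by simp
      show "\<forall>\<^sub>F \<theta> in at_right 0. muF N G (\<lambda>j. \<theta> * L1 j) - 2 * lamF N G (\<lambda>j. \<theta> * L1 j) < 0"
      proof (rule eventually_mono[OF ev_small[OF th4p]])
        fix th assume th: "0 < th \<and> th \<le> th4"
        have th': "0 < th" "th \<le> thT" "th \<le> thG" "th \<le> K / (C + 1)" using th unfolding th4_def by auto
        have eq: "muF N G (\<lambda>j. th * L1 j) - 2 * lamF N G (\<lambda>j. th * L1 j) + K * th^2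
            = - (PT.Rt th - (- th * PT.bet + th^2 * PT.cc wT)) + 2 * (PG.Rt th - (- th * PG.bet + th^2 * PG.cc wG))"
        proof -
          have z: "- (th^2 * (coef * Sd)) + 2 * (th^2 * (Sd / (g * (real N)^2))) + K * th^2 = 0"
            using zz[of "K * th^2"] unfolding K_def by (simp add: mult_ac)
          show ?thesis unfolding muF_eq lamF_eq betT betG ccT ccG using z by (simp add: algebra_simps)
        qed
        have "\<bar>- (PT.Rt th - (- th * PT.bet + th^2 * PT.cc wT)) + 2 * (PG.Rt th - (- th * PG.bet + th^2 * PG.cc wG))\<bar>
            \<le> (C2T + KT3) * th^3 + 2 * ((C2G + KG3) * th^3)"
          using secT[of th] secG[of th] th' by (simp add: abs_le_iff)
        hence b: "muF N G (\<lambda>j. th * L1 j) - 2 * lamF N G (\<lambda>j. th * L1 j) + K * th^2 \<le> C * th^3"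
          using eq unfolding C_def by (simp add: algebra_simps)
        have "C * th \<le> C * (K / (C + 1))" using th'(4) Cn by (rule mult_left_mono)
        also have "\<dots> < K" using Kp Cn by (simp add: field_simps)
        finally have "C * th < K" .
        hence "C * th * th^2 < K * th^2" using th' by simp
        hence "C * th^3 < K * th^2" by (simp add: power3_eq_cube power2_eq_square mult_ac)
        then show "muF N G (\<lambda>j. th * L1 j) - 2 * lamF N G (\<lambda>j. th * L1 j) < 0" using b by linarith
      qed
    qed
    show "(\<lambda>\<theta>. muF N G (\<lambda>j. \<theta> * L1 j)
              - (2 * \<theta> * lam1 - \<theta>^2 * (2 * (real N + 2) / ((real N)^2 * (real N + 1) * g))
                   * (\<Sum>j<N. (L1 j - lam1)^2)))
           \<in> O[at_right 0](\<lambda>\<theta>. \<theta>^3)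
      \<and> (\<forall>W :: real \<Rightarrow> nat \<times> nat \<Rightarrow> real.
            (\<forall>\<^sub>F \<theta> in at_right 0.
               op_eigvec N G (\<lambda>j. \<theta> * L1 j) (- muF N G (\<lambda>j. \<theta> * L1 j)) (W \<theta>)
               \<and> (\<Sum>p\<in>triN N. (W \<theta> p)^2) = 1
               \<and> (\<forall>p\<in>triN N. W \<theta> p > 0))
            \<longrightarrow> (\<forall>(j,l)\<in>triN N.
                  (\<lambda>\<theta>. W \<theta> (j,l)
                      - (sqrt 2 / sqrt (real N * (real N + 1))
                         + \<theta> * (- (sqrt 2 / sqrt (real N * (real N + 1))) / (g * real N)
                                   * (L1 j + L1 l - 2 * lam1))))
                  \<in> O[at_right 0](\<lambda>\<theta>. \<theta>^2)))
      \<and> ((\<lambda>\<theta>. muF N G (\<lambda>j. \<theta> * L1 j) - 2 * lamF N G (\<lambda>j. \<theta> * L1 j)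
              - (- 2 * \<theta>^2 / ((real N)^2 * (real N + 1) * g) * (\<Sum>j<N. (L1 j - lam1)^2)))
           \<in> O[at_right 0](\<lambda>\<theta>. \<theta>^3))
      \<and> ((\<exists>j<N. \<exists>l<N. L1 j \<noteq> L1 l) \<longrightarrow>
           (\<forall>\<^sub>F \<theta> in at_right 0. muF N G (\<lambda>j. \<theta> * L1 j) - 2 * lamF N G (\<lambda>j. \<theta> * L1 j) < 0))"
      using c1 c2 c3 c4 by blast
  qed
  show ?thesis using claim1 claim2 by blast
qed


end
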